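(* Let $T$ be a tree, $A\in\mathcal R(T)$, and let $T_1,\dots,T_c$ be mutually independent subtrees of $T$. (1) If $\mathrm{nullity}(A)>P(T\setminus(T_1\cup\dots\cup T_c))$, then at least one of $A[T_1],\dots,A[T_c]$ is singular. (2) If $\lambda\in\sigma(A)$ with $\mathrm{mult}(\lambda,A)>P(T\setminus(T_1\cup\dots\cup T_c))$, then $\lambda$ is an eigenvalue of at least one of $A[T_1],\dots,A[T_c]$.
   Context: $\mathcal R(T)$ is the set of real matrices indexed by $V(T)$ with $a_{ij}\ne0$ iff $\{i,j\}\in E(T)$ for $i\ne j$, and $a_{ij}a_{ji}>0$ on every edge; diagonal arbitrary. $A[T_i]$ is the principal submatrix on $V(T_i)$. Subtrees $T_1,T_2$ are independent if no edge of $T$ joins them. A path cover of $G$ is a set of vertex-disjoint induced paths covering $V(G)$; $P(G)$ is the minimum size of a path cover. $\mathrm{mult}(\lambda,A)$ is the algebraic multiplicity of $\lambda$ (matrices in $\mathcal R(T)$ are diagonally similar to real symmetric matrices). *)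

theory Defs
  imports "Jordan_Normal_Form.Char_Poly" "Jordan_Normal_Form.Matrix_Kernel"
    "Jordan_Normal_Form.DL_Submatrix"
begin

text \<open>Graphs: vertex set {0..<n}, adjacency relation E (symmetric, irreflexive).
  Subgraphs are identified with their vertex sets (induced subgraphs).\<close>

definition simple_graph :: "nat \<Rightarrow> (nat \<Rightarrow> nat \<Rightarrow> bool) \<Rightarrow> bool" where
  "simple_graph n E \<longleftrightarrow> (\<forall>i j. E i j \<longrightarrow> i < n \<and> j < n \<and> i \<noteq> j \<and> E j i)"

definition edges_in :: "(nat \<Rightarrow> nat \<Rightarrow> bool) \<Rightarrow> nat set \<Rightarrow> (nat \<times> nat) set" where
  "edges_in E S = {(i,j). i \<in> S \<and> j \<in> S \<and> i < j \<and> E i j}"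

definition walk_in :: "(nat \<Rightarrow> nat \<Rightarrow> bool) \<Rightarrow> nat set \<Rightarrow> nat list \<Rightarrow> bool" where
  "walk_in E S xs \<longleftrightarrow> xs \<noteq> [] \<and> set xs \<subseteq> S \<and>
     (\<forall>k. Suc k < length xs \<longrightarrow> E (xs ! k) (xs ! Suc k))"

definition connected_in :: "(nat \<Rightarrow> nat \<Rightarrow> bool) \<Rightarrow> nat set \<Rightarrow> bool" where
  "connected_in E S \<longleftrightarrow> (\<forall>u\<in>S. \<forall>v\<in>S. \<exists>xs. walk_in E S xs \<and> hd xs = u \<and> last xs = v)"

definition is_tree_on :: "(nat \<Rightarrow> nat \<Rightarrow> bool) \<Rightarrow> nat set \<Rightarrow> bool" where
  "is_tree_on E S \<longleftrightarrow> finite S \<and> S \<noteq> {} \<and> connected_in E S \<and> card (edges_in E S) = card S - 1"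

definition is_tree :: "nat \<Rightarrow> (nat \<Rightarrow> nat \<Rightarrow> bool) \<Rightarrow> bool" where
  "is_tree n E \<longleftrightarrow> simple_graph n E \<and> is_tree_on E {0..<n}"

definition is_subtree :: "nat \<Rightarrow> (nat \<Rightarrow> nat \<Rightarrow> bool) \<Rightarrow> nat set \<Rightarrow> bool" where
  "is_subtree n E S \<longleftrightarrow> S \<subseteq> {0..<n} \<and> is_tree_on E S"

definition independent :: "(nat \<Rightarrow> nat \<Rightarrow> bool) \<Rightarrow> nat set \<Rightarrow> nat set \<Rightarrow> bool" where
  "independent E S1 S2 \<longleftrightarrow> S1 \<inter> S2 = {} \<and> (\<forall>i\<in>S1. \<forall>j\<in>S2. \<not> E i j)"

definition induced_path :: "(nat \<Rightarrow> nat \<Rightarrow> bool) \<Rightarrow> nat set \<Rightarrow> bool" where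
  "induced_path E Q \<longleftrightarrow> (\<exists>xs. xs \<noteq> [] \<and> distinct xs \<and> set xs = Q \<and>
     (\<forall>k l. k < length xs \<longrightarrow> l < length xs \<longrightarrow>
        (E (xs ! k) (xs ! l) \<longleftrightarrow> (l = Suc k \<or> k = Suc l))))"

definition path_cover :: "(nat \<Rightarrow> nat \<Rightarrow> bool) \<Rightarrow> nat set \<Rightarrow> nat set set \<Rightarrow> bool" where
  "path_cover E S C \<longleftrightarrow> \<Union>C = S \<and> (\<forall>Q\<in>C. induced_path E Q) \<and>
     (\<forall>Q1\<in>C. \<forall>Q2\<in>C. Q1 \<noteq> Q2 \<longrightarrow> Q1 \<inter> Q2 = {})"

definition path_cover_number :: "(nat \<Rightarrow> nat \<Rightarrow> bool) \<Rightarrow> nat set \<Rightarrow> nat" where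
  "path_cover_number E S = (LEAST k. \<exists>C. path_cover E S C \<and> finite C \<and> card C = k)"

definition in_R :: "nat \<Rightarrow> (nat \<Rightarrow> nat \<Rightarrow> bool) \<Rightarrow> real mat \<Rightarrow> bool" where
  "in_R n E A \<longleftrightarrow> A \<in> carrier_mat n n \<and>
     (\<forall>i<n. \<forall>j<n. i \<noteq> j \<longrightarrow> (A $$ (i,j) \<noteq> 0 \<longleftrightarrow> E i j)) \<and>
     (\<forall>i<n. \<forall>j<n. E i j \<longrightarrow> A $$ (i,j) * A $$ (j,i) > 0)"

definition principal_submatrix :: "'a mat \<Rightarrow> nat set \<Rightarrow> 'a mat" where
  "principal_submatrix A S = submatrix A S S"

definition alg_mult :: "real \<Rightarrow> real mat \<Rightarrow> nat" where
  "alg_mult x A = Polynomial.order x (char_poly A)"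

end

theory Submission
  imports Defs "Jordan_Normal_Form.Jordan_Normal_Form_Existence" "Jordan_Normal_Form.Jordan_Normal_Form_Uniqueness"
begin

lemma mat_kernel_rows:
  fixes rs :: "'a::field vec list"
  assumes rs: "set rs \<subseteq> carrier_vec n"
  shows "mat_kernel (mat_of_rows n rs) = {x \<in> carrier_vec n. \<forall>r\<in>set rs. r \<bullet> x = 0}"
proof -
  have "mat_of_rows n rs *\<^sub>v x = 0\<^sub>v (length rs) \<longleftrightarrow> (\<forall>r\<in>set rs. r \<bullet> x = 0)" for x
  proof -
    have "mat_of_rows n rs *\<^sub>v x = 0\<^sub>v (length rs) \<longleftrightarrow> (\<forall>i<length rs. rs ! i \<bullet> x = 0)"
      using rs by (auto simp: vec_eq_iff mat_of_rows_row nth_mem subset_iff)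
    also have "\<dots> \<longleftrightarrow> (\<forall>r\<in>set rs. r \<bullet> x = 0)" by (metis in_set_conv_nth)
    finally show ?thesis .
  qed
  thus ?thesis using mat_kernel[OF mat_of_rows_carrier(1)] by auto
qed

lemma kernel_dim_cong:
  fixes A B :: "'a::field mat"
  assumes "dim_col A = dim_col B" "mat_kernel A = mat_kernel B"
  shows "kernel_dim A = kernel_dim B"
  using assms unfolding kernel_dim_def by simp

lemma kd_row_le:
  fixes rs :: "'a::field vec list" and w :: "'a vec"
  assumes rs: "set rs \<subseteq> carrier_vec n" and w: "w \<in> carrier_vec n"
  shows "kernel_dim (mat_of_rows n rs) \<le> kernel_dim (mat_of_rows n (rs @ [w])) + 1
     \<and> ((\<exists>x \<in> mat_kernel (mat_of_rows n rs). w \<bullet> x \<noteq> 0) \<longrightarrow>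
         kernel_dim (mat_of_rows n rs) = kernel_dim (mat_of_rows n (rs @ [w])) + 1)"
proof (cases "\<exists>x \<in> mat_kernel (mat_of_rows n rs). w \<bullet> x \<noteq> 0")
  case False
  have rs2: "set (rs @ [w]) \<subseteq> carrier_vec n" using rs w by auto
  have "mat_kernel (mat_of_rows n rs) = mat_kernel (mat_of_rows n (rs @ [w]))"
    using False unfolding mat_kernel_rows[OF rs] mat_kernel_rows[OF rs2] by auto
  then have "kernel_dim (mat_of_rows n rs) = kernel_dim (mat_of_rows n (rs @ [w]))"
    by (intro kernel_dim_cong) auto
  then show ?thesis using False by simp
next
  case True
  then obtain x0 where x0: "x0 \<in> mat_kernel (mat_of_rows n rs)" "w \<bullet> x0 \<noteq> 0" by auto
  interpret K1: kernel "length rs" n "mat_of_rows n rs" by (unfold_locales, simp)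
  interpret K2: kernel "Suc (length rs)" n "mat_of_rows n (rs@[w])" 
    by (unfold_locales) (metis length_append_singleton mat_of_rows_carrier(1))
  interpret V1: vec_space "TYPE('a)" 1 .
  define T where "T = (\<lambda>x::'a vec. vec 1 (\<lambda>_. w \<bullet> x))"
  have lin: "linear_map class_ring K1.VK V1.V T"
  proof (unfold_locales)
    show "T \<in> module_hom class_ring K1.VK V1.V"
      unfolding module_hom_def T_def
      using w by (auto simp: module_vec_simps mat_kernel_def scalar_prod_add_distrib[of w n] 
         scalar_prod_smult_distrib[of w n] intro!: eq_vecI)
  qed
  interpret L: linear_map class_ring K1.VK V1.V T by (rule lin)
  have fd: "K1.Ker.fin_dim"
  proof -
    obtain B where "finite B" "K1.basis B" using kernel_basis_exists[of "mat_of_rows n rs" "length rs" n] by auto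
    then show ?thesis unfolding K1.Ker.fin_dim_def K1.Ker.basis_def by auto
  qed
  have rn: "vectorspace.dim class_ring (V1.V\<lparr>carrier := L.imT\<rparr>) + vectorspace.dim class_ring (K1.VK\<lparr>carrier := L.kerT\<rparr>) = K1.dim"
    using L.rank_nullity[OF fd] by simp
  have rs2: "set (rs @ [w]) \<subseteq> carrier_vec n" using rs w by auto
  have ker: "L.kerT = mat_kernel (mat_of_rows n (rs @ [w]))"
    unfolding mat_kernel_rows[OF rs2] L.ker_def
    using mat_kernel_rows[OF rs] by (auto simp: T_def module_vec_simps vec_eq_iff)
  have im: "L.imT = carrier_vec 1"
  proof
    show "L.imT \<subseteq> carrier_vec 1" using L.im_def by (auto simp: T_def)
    show "carrier_vec 1 \<subseteq> L.imT"
    proof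
      fix v :: "'a vec" assume v: "v \<in> carrier_vec 1"
      define c where "c = v $ 0 / (w \<bullet> x0)"
      have x0c: "x0 \<in> carrier_vec n" using x0(1) mat_kernel_rows[OF rs] by auto
      have "c \<cdot>\<^sub>v x0 \<in> mat_kernel (mat_of_rows n rs)" 
        using x0(1) by (intro mat_kernel_smult) auto
      moreover have "T (c \<cdot>\<^sub>v x0) = v"
        using v x0 x0c w by (auto simp: T_def c_def vec_eq_iff scalar_prod_smult_distrib[of w n])
      ultimately show "v \<in> L.imT" unfolding L.im_def by force
    qed
  qed
  have d1: "vectorspace.dim class_ring (V1.V\<lparr>carrier := L.imT\<rparr>) = 1"
    using V1.dim_is_n unfolding im by (simp add: module_vec_def)
  have "kernel_dim (mat_of_rows n rs) = kernel_dim (mat_of_rows n (rs @ [w])) + 1"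
    using rn d1 ker K1.kernel_dim K2.kernel_dim by simp
  then show ?thesis by simp
qed

lemma kd_rows_le:
  fixes rs ws :: "'a::field vec list"
  assumes rs: "set rs \<subseteq> carrier_vec n" and ws: "set ws \<subseteq> carrier_vec n"
  shows "kernel_dim (mat_of_rows n rs) \<le> kernel_dim (mat_of_rows n (rs @ ws)) + length ws"
  using ws
proof (induction ws rule: rev_induct)
  case Nil then show ?case by simp
next
  case (snoc w ws)
  have a: "set (rs @ ws) \<subseteq> carrier_vec n" using rs snoc.prems by auto
  have "kernel_dim (mat_of_rows n (rs @ ws)) \<le> kernel_dim (mat_of_rows n (rs @ ws @ [w])) + 1"
    using kd_row_le[OF a, of w] snoc.prems by auto
  then show ?case using snoc by auto
qed

lemma kd_rows_eq:
  fixes rs ws :: "'a::field vec list"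
  assumes rs: "set rs \<subseteq> carrier_vec n" and ws: "set ws \<subseteq> carrier_vec n"
    and wit: "\<And>i. i < length ws \<Longrightarrow> \<exists>x\<in>mat_kernel (mat_of_rows n rs).
          ws ! i \<bullet> x \<noteq> 0 \<and> (\<forall>j<length ws. j \<noteq> i \<longrightarrow> ws ! j \<bullet> x = 0)"
  shows "kernel_dim (mat_of_rows n rs) = kernel_dim (mat_of_rows n (rs @ ws)) + length ws"
  using ws wit
proof (induction ws rule: rev_induct)
  case Nil then show ?case by simp
next
  case (snoc w ws)
  have a: "set (rs @ ws) \<subseteq> carrier_vec n" using rs snoc.prems by auto
  have IH: "kernel_dim (mat_of_rows n rs) = kernel_dim (mat_of_rows n (rs @ ws)) + length ws"
  proof (rule snoc.IH)
    show "set ws \<subseteq> carrier_vec n" using snoc.prems by auto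
    fix i assume i: "i < length ws"
    from snoc.prems(2)[of i] i obtain x where "x\<in>mat_kernel (mat_of_rows n rs)"
      "(ws @ [w]) ! i \<bullet> x \<noteq> 0" "\<forall>j<length (ws@[w]). j \<noteq> i \<longrightarrow> (ws@[w]) ! j \<bullet> x = 0" by auto
    then show "\<exists>x\<in>mat_kernel (mat_of_rows n rs).
          ws ! i \<bullet> x \<noteq> 0 \<and> (\<forall>j<length ws. j \<noteq> i \<longrightarrow> ws ! j \<bullet> x = 0)"
    proof (intro bexI[of _ x] conjI allI impI)
      show "ws ! i \<bullet> x \<noteq> 0" using \<open>(ws @ [w]) ! i \<bullet> x \<noteq> 0\<close> i by (simp add: nth_append)
      fix j assume "j < length ws" "j \<noteq> i"
      then show "ws ! j \<bullet> x = 0" using \<open>\<forall>j<length (ws@[w]). j \<noteq> i \<longrightarrow> (ws@[w]) ! j \<bullet> x = 0\<close>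
        by (metis length_append_singleton less_SucI nth_append)
    qed (use \<open>x\<in>mat_kernel (mat_of_rows n rs)\<close> in simp)
  qed
  from snoc.prems(2)[of "length ws"] obtain x where x: "x\<in>mat_kernel (mat_of_rows n rs)"
      "(ws @ [w]) ! length ws \<bullet> x \<noteq> 0" "\<forall>j<length (ws@[w]). j \<noteq> length ws \<longrightarrow> (ws@[w]) ! j \<bullet> x = 0" by auto
  have "x \<in> mat_kernel (mat_of_rows n (rs @ ws))"
    unfolding mat_kernel_rows[OF a] using x(1) x(3) unfolding mat_kernel_rows[OF rs]
    by (auto simp: nth_append in_set_conv_nth)
  moreover have "w \<bullet> x \<noteq> 0" using x(2) by simp
  ultimately have "kernel_dim (mat_of_rows n (rs @ ws)) = kernel_dim (mat_of_rows n (rs @ ws @ [w])) + 1"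
    using kd_row_le[OF a, of w] snoc.prems by auto
  then show ?case using IH by simp
qed

definition rowsU :: "'a::field mat \<Rightarrow> nat \<Rightarrow> nat set \<Rightarrow> 'a vec list" where
  "rowsU M n U = map (\<lambda>u. if u \<in> U then row M u else unit_vec n u) [0..<n]"

definition KS :: "'a::field mat \<Rightarrow> nat \<Rightarrow> nat set \<Rightarrow> 'a vec set" where
  "KS M n U = {x \<in> carrier_vec n. (\<forall>u<n. u \<in> U \<longrightarrow> (M *\<^sub>v x) $ u = 0) \<and> (\<forall>u<n. u \<notin> U \<longrightarrow> x $ u = 0)}"

definition nul :: "'a::field mat \<Rightarrow> nat \<Rightarrow> nat set \<Rightarrow> nat" where
  "nul M n U = kernel_dim (mat_of_rows n (rowsU M n U))"

lemma rowsU_carrier: "M \<in> carrier_mat n n \<Longrightarrow> set (rowsU M n U) \<subseteq> carrier_vec n"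
  unfolding rowsU_def by auto

lemma ker_rowsU:
  fixes M :: "'a::field mat"
  assumes M: "M \<in> carrier_mat n n" and ws: "set ws \<subseteq> carrier_vec n"
  shows "mat_kernel (mat_of_rows n (rowsU M n U @ ws)) = {x \<in> KS M n U. \<forall>w\<in>set ws. w \<bullet> x = 0}"
proof -
  have c: "set (rowsU M n U @ ws) \<subseteq> carrier_vec n" using rowsU_carrier[OF M] ws by auto
  have "x \<in> carrier_vec n \<Longrightarrow> (\<forall>r\<in>set (rowsU M n U). r \<bullet> x = 0) \<longleftrightarrow>
     (\<forall>u<n. u \<in> U \<longrightarrow> (M *\<^sub>v x) $ u = 0) \<and> (\<forall>u<n. u \<notin> U \<longrightarrow> x $ u = 0)" for x
  proof -
    assume x: "x \<in> carrier_vec n"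
    have "(\<forall>r\<in>set (rowsU M n U). r \<bullet> x = 0) \<longleftrightarrow> (\<forall>u<n. (if u \<in> U then row M u else unit_vec n u) \<bullet> x = 0)"
      unfolding rowsU_def by auto
    also have "\<dots> \<longleftrightarrow> (\<forall>u<n. u \<in> U \<longrightarrow> (M *\<^sub>v x) $ u = 0) \<and> (\<forall>u<n. u \<notin> U \<longrightarrow> x $ u = 0)"
      using M x by (auto simp: index_mult_mat_vec)
    finally show ?thesis .
  qed
  then show ?thesis unfolding mat_kernel_rows[OF c] KS_def by auto
qed

lemma ker_rowsU0:
  fixes M :: "'a::field mat"
  assumes M: "M \<in> carrier_mat n n"
  shows "mat_kernel (mat_of_rows n (rowsU M n U)) = KS M n U"
  using ker_rowsU[OF M, of "[]" U] by simp

lemma mv_sum: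
  fixes M :: "'a::field mat"
  assumes "M \<in> carrier_mat n n" "x \<in> carrier_vec n" "u < n"
  shows "(M *\<^sub>v x) $ u = (\<Sum>w<n. M $$ (u,w) * x $ w)"
  using assms by (auto simp: index_mult_mat_vec scalar_prod_def lessThan_atLeast0 intro!: sum.cong)

lemma mv_cong:
  fixes M :: "'a::field mat"
  assumes "M \<in> carrier_mat n n" "x \<in> carrier_vec n" "y \<in> carrier_vec n" "u < n"
    and "\<And>w. w < n \<Longrightarrow> M $$ (u,w) * x $ w = M $$ (u,w) * y $ w"
  shows "(M *\<^sub>v x) $ u = (M *\<^sub>v y) $ u"
proof -
  have "(\<Sum>w<n. M $$ (u,w) * x $ w) = (\<Sum>w<n. M $$ (u,w) * y $ w)" using assms(5) by (intro sum.cong) auto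
  then show ?thesis using assms(1-4) mv_sum[of M n] by metis
qed

definition rv :: "nat \<Rightarrow> nat set \<Rightarrow> 'a::zero vec \<Rightarrow> 'a vec" where
  "rv n S x = vec n (\<lambda>w. if w \<in> S then x $ w else 0)"

lemma rv_carrier[simp]: "rv n S x \<in> carrier_vec n" unfolding rv_def by auto
lemma rv_index[simp]: "w < n \<Longrightarrow> rv n S x $ w = (if w \<in> S then x $ w else 0)" unfolding rv_def by auto

lemma path_remove:
  fixes M :: "'a::field mat" and qs :: "nat list" and Rs :: "nat \<Rightarrow> nat set"
  assumes M: "M \<in> carrier_mat n n"
  and U: "U \<subseteq> {0..<n}"
  and qsU: "set qs \<subseteq> U" and dq: "distinct qs" and qne: "qs \<noteq> []"
  and pat: "\<And>u w. u < n \<Longrightarrow> w < n \<Longrightarrow> u \<noteq> w \<Longrightarrow> M $$ (u,w) \<noteq> 0 \<Longrightarrow> E u w"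
  and Esym: "\<And>u w. E u w \<Longrightarrow> E w u"
  and path: "\<And>k l. k < length qs \<Longrightarrow> l < length qs \<Longrightarrow> E (qs!k) (qs!l) \<longleftrightarrow> (l = Suc k \<or> k = Suc l)"
  and pathnz: "\<And>k. Suc k < length qs \<Longrightarrow> M $$ (qs!k, qs!Suc k) \<noteq> 0"
  and RsR: "\<And>i. i < length qs \<Longrightarrow> Rs i \<subseteq> U - set qs"
  and clos: "\<And>i u w. i < length qs \<Longrightarrow> u \<in> Rs i \<Longrightarrow> w \<in> U - set qs - Rs i \<Longrightarrow> \<not> E u w"
  and att: "\<And>i j r. i < length qs \<Longrightarrow> j < length qs \<Longrightarrow> j \<noteq> i \<Longrightarrow> r \<in> Rs i \<Longrightarrow> \<not> E (qs!j) r"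
  and cov: "\<And>j r. j < length qs \<Longrightarrow> r \<in> U - set qs \<Longrightarrow> E (qs!j) r \<Longrightarrow> r \<in> Rs j"
  shows "nul M n U \<le> nul M n (U - set qs) + 1"
proof -
  define m where "m = length qs"
  define R where "R = U - set qs"
  have Mz: "M $$ (u,w) = 0" if "u < n" "w < n" "u \<noteq> w" "\<not> E u w" for u w
    using pat that by blast
  have qn: "qs ! i < n" if "i < m" for i using that qsU U nth_mem unfolding m_def by fastforce
  have qU: "qs ! i \<in> U" if "i < m" for i using that qsU nth_mem unfolding m_def by fastforce
  have qR: "qs ! i \<notin> R" if "i < m" for i using that unfolding R_def m_def by auto
  have RU: "R \<subseteq> U" unfolding R_def by auto
  have Rn: "u \<in> R \<Longrightarrow> u < n" for u using RU U by auto
  have RsR': "Rs i \<subseteq> R" if "i < m" for i using RsR that unfolding R_def m_def by auto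
  have qinj: "qs ! i = qs ! j \<longleftrightarrow> i = j" if "i < m" "j < m" for i j
    using dq that nth_eq_iff_index_eq unfolding m_def by blast
  have inR: "u \<in> R \<longleftrightarrow> u \<in> U \<and> (\<forall>i<m. u \<noteq> qs ! i)" for u
    unfolding R_def m_def by (auto simp: in_set_conv_nth)
  have restr: "rv n (Rs i) x \<in> KS M n R"
    if i: "i < m" and x: "x \<in> carrier_vec n" and sx: "\<forall>u<n. u \<notin> U \<longrightarrow> x $ u = 0"
      and xq: "x $ (qs ! i) = 0" and mx: "\<forall>u\<in>Rs i. (M *\<^sub>v x) $ u = 0" for i x
  proof -
    let ?y = "rv n (Rs i) x"
    have "(M *\<^sub>v ?y) $ u = 0" if u: "u \<in> R" for u
    proof (cases "u \<in> Rs i")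
      case True
      have "(M *\<^sub>v ?y) $ u = (M *\<^sub>v x) $ u"
      proof (rule mv_cong[OF M rv_carrier x Rn[OF u]])
        fix w assume w: "w < n"
        show "M $$ (u, w) * ?y $ w = M $$ (u, w) * x $ w"
        proof (cases "w \<in> Rs i")
          case False
          have "M $$ (u, w) * x $ w = 0"
          proof (cases "w \<in> U")
            case False then show ?thesis using sx w by auto
          next
            case wU: True
            show ?thesis
            proof (cases "w \<in> R")
              case True
              then have "\<not> E u w" using clos[of i u w] \<open>u \<in> Rs i\<close> False i unfolding m_def R_def by auto
              moreover have "u \<noteq> w" using \<open>u \<in> Rs i\<close> False by auto
              ultimately show ?thesis using Mz[of u w] w Rn[OF u] by auto
            next
              case notR: False
              then obtain j where j: "j < m" "w = qs ! j" using inR wU by auto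
              show ?thesis
              proof (cases "j = i")
                case True then show ?thesis using xq j by simp
              next
                case False
                have "\<not> E (qs!j) u" using att[of i j u] j i False \<open>u \<in> Rs i\<close> unfolding m_def by auto
                then have "\<not> E u w" using Esym j by blast
                moreover have "u \<noteq> w" using u notR by auto
                ultimately show ?thesis using Mz[of u w] w Rn[OF u] by auto
              qed
            qed
          qed
          then show ?thesis using False w by simp
        qed (use w in simp)
      qed
      then show ?thesis using mx True by simp
    next
      case False
      have "(M *\<^sub>v ?y) $ u = (M *\<^sub>v 0\<^sub>v n) $ u"
      proof (rule mv_cong[OF M rv_carrier _ Rn[OF u]])
        fix w assume w: "w < n"
        show "M $$ (u, w) * ?y $ w = M $$ (u, w) * 0\<^sub>v n $ w"
        proof (cases "w \<in> Rs i")
          case True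
          then have "\<not> E w u" using clos[of i w u] u False i unfolding m_def R_def by auto
          then have "\<not> E u w" using Esym by blast
          moreover have "u \<noteq> w" using True False by auto
          ultimately show ?thesis using Mz[of u w] w Rn[OF u] by auto
        qed (use w in simp)
      qed simp
      then show ?thesis using M Rn[OF u] by simp
    qed
    moreover have "?y $ u = 0" if "u < n" "u \<notin> R" for u using that RsR'[OF i] by auto
    ultimately show ?thesis unfolding KS_def using Rn by auto
  qed
  define I where "I = {i. i < m \<and> (\<exists>z\<in>KS M n R. (M *\<^sub>v z) $ (qs!i) \<noteq> 0)}"
  have gI: "(M *\<^sub>v z) $ (qs!i) = 0" if "i < m" "i \<notin> I" "z \<in> KS M n R" for i z
    using that unfolding I_def by auto
  have KRs: "z \<in> carrier_vec n" "\<And>u. u < n \<Longrightarrow> u \<notin> R \<Longrightarrow> z $ u = 0"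
      "\<And>u. u \<in> R \<Longrightarrow> (M *\<^sub>v z) $ u = 0" if "z \<in> KS M n R" for z
    using that Rn unfolding KS_def by auto
  have KUs: "x \<in> carrier_vec n" "\<And>u. u < n \<Longrightarrow> u \<notin> U \<Longrightarrow> x $ u = 0"
      "\<And>u. u \<in> U \<Longrightarrow> (M *\<^sub>v x) $ u = 0" if "x \<in> KS M n U" for x
    using that U unfolding KS_def by auto
  have wit: "\<exists>z\<in>KS M n R. (M *\<^sub>v z) $ (qs!i) \<noteq> 0 \<and> (\<forall>j<m. j \<noteq> i \<longrightarrow> (M *\<^sub>v z) $ (qs!j) = 0)"
    if i: "i \<in> I" for i
  proof -
    from i obtain z where im: "i < m" and z: "z \<in> KS M n R" "(M *\<^sub>v z) $ (qs!i) \<noteq> 0"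
      unfolding I_def by auto
    let ?z = "rv n (Rs i) z"
    have zK: "?z \<in> KS M n R"
    proof (rule restr[OF im KRs(1)[OF z(1)]])
      show "\<forall>u<n. u \<notin> U \<longrightarrow> z $ u = 0" using KRs(2)[OF z(1)] RU by auto
      show "z $ (qs ! i) = 0" using KRs(2)[OF z(1) qn[OF im] qR[OF im]] .
      show "\<forall>u\<in>Rs i. (M *\<^sub>v z) $ u = 0" using KRs(3)[OF z(1)] RsR'[OF im] by auto
    qed
    have "(M *\<^sub>v ?z) $ (qs!i) = (M *\<^sub>v z) $ (qs!i)"
    proof (rule mv_cong[OF M rv_carrier KRs(1)[OF z(1)] qn[OF im]])
      fix w assume w: "w < n"
      show "M $$ (qs!i, w) * ?z $ w = M $$ (qs!i, w) * z $ w"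
      proof (cases "w \<in> Rs i")
        case False
        have "M $$ (qs!i, w) * z $ w = 0"
        proof (cases "w \<in> R")
          case True
          then have "\<not> E (qs!i) w" using cov[of i w] False im unfolding m_def R_def by auto
          moreover have "qs!i \<noteq> w" using True qR[OF im] by auto
          ultimately show ?thesis using Mz w qn[OF im] by auto
        qed (use KRs(2)[OF z(1)] w in auto)
        then show ?thesis using False w by simp
      qed (use w in simp)
    qed
    moreover have "(M *\<^sub>v ?z) $ (qs!j) = 0" if j: "j < m" "j \<noteq> i" for j
    proof -
      have "(M *\<^sub>v ?z) $ (qs!j) = (M *\<^sub>v 0\<^sub>v n) $ (qs!j)"
      proof (rule mv_cong[OF M rv_carrier _ qn[OF j(1)]])
        fix w assume w: "w < n"
        show "M $$ (qs!j, w) * ?z $ w = M $$ (qs!j, w) * 0\<^sub>v n $ w"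
        proof (cases "w \<in> Rs i")
          case True
          then have "\<not> E (qs!j) w" using att[of i j w] j im unfolding m_def by auto
          moreover have "qs!j \<noteq> w" using True RsR'[OF im] qR[OF j(1)] by auto
          ultimately show ?thesis using Mz w qn[OF j(1)] by auto
        qed (use w in simp)
      qed simp
      then show ?thesis using M qn[OF j(1)] by simp
    qed
    ultimately show ?thesis using zK z(2) by (intro bexI[of _ ?z]) auto
  qed
  have prp: "x $ (qs ! Suc i) = 0"
    if x: "x \<in> KS M n U" and i: "Suc i < m" "i \<notin> I" and xi: "x $ (qs ! i) = 0"
      and xp: "i = 0 \<or> x $ (qs ! (i - 1)) = 0" for x i
  proof -
    have im: "i < m" using i by auto
    let ?y = "rv n (Rs i) x"
    have yK: "?y \<in> KS M n R"
      using restr[OF im KUs(1)[OF x]] KUs(2)[OF x] xi KUs(3)[OF x] RsR'[OF im] RU by auto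
    then have y0: "(M *\<^sub>v ?y) $ (qs!i) = 0" using gI im i by auto
    let ?y2 = "rv n (Rs i \<union> {qs ! Suc i}) x"
    have "(M *\<^sub>v x) $ (qs!i) = (M *\<^sub>v ?y2) $ (qs!i)"
    proof (rule mv_cong[OF M KUs(1)[OF x] rv_carrier qn[OF im]])
      fix w assume w: "w < n"
      show "M $$ (qs!i, w) * x $ w = M $$ (qs!i, w) * ?y2 $ w"
      proof (cases "w \<in> Rs i \<union> {qs ! Suc i}")
        case False
        have "M $$ (qs!i, w) * x $ w = 0"
        proof (cases "w \<in> U")
          case False then show ?thesis using KUs(2)[OF x] w by auto
        next
          case wU: True
          show ?thesis
          proof (cases "w \<in> R")
            case True
            then have "\<not> E (qs!i) w" using cov[of i w] False im unfolding m_def R_def by auto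
            moreover have "qs!i \<noteq> w" using True qR[OF im] by auto
            ultimately show ?thesis using Mz w qn[OF im] by auto
          next
            case False
            then obtain l where l: "l < m" "w = qs ! l" using inR wU by auto
            consider "l = i" | "l = Suc i" | "Suc l = i" | "l \<noteq> i" "l \<noteq> Suc i" "Suc l \<noteq> i" by auto
            then show ?thesis
            proof cases
              case 1 then show ?thesis using xi l by simp
            next
              case 2 then show ?thesis using \<open>w \<notin> Rs i \<union> {qs ! Suc i}\<close> l by simp
            next
              case 3 then show ?thesis using xp l by auto
            next
              case 4
              then have "\<not> E (qs!i) w" using path[of i l] l im unfolding m_def by auto
              moreover have "qs!i \<noteq> w" using qinj[OF im l(1)] 4 l by auto
              ultimately show ?thesis using Mz w qn[OF im] by auto
            qed
          qed
        qed
        then show ?thesis using False w by simp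
      qed (use w in auto)
    qed
    also have "\<dots> = (M *\<^sub>v ?y) $ (qs!i) + M $$ (qs!i, qs!Suc i) * x $ (qs ! Suc i)"
    proof -
      have sn: "qs ! Suc i < n" using qn i by auto
      have nR: "qs ! Suc i \<notin> Rs i" using RsR'[OF im] qR[OF i(1)] by auto
      have "(M *\<^sub>v ?y2) $ (qs!i) = (\<Sum>w<n. M $$ (qs!i,w) * ?y2 $ w)"
        using mv_sum[OF M rv_carrier qn[OF im]] .
      also have "\<dots> = (\<Sum>w<n. M $$ (qs!i,w) * ?y $ w + (if w = qs ! Suc i then M $$ (qs!i,w) * x $ w else 0))"
        using nR by (intro sum.cong) auto
      also have "\<dots> = (\<Sum>w<n. M $$ (qs!i,w) * ?y $ w) + M $$ (qs!i, qs!Suc i) * x $ (qs ! Suc i)"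
        using sn by (simp add: sum.distrib)
      also have "(\<Sum>w<n. M $$ (qs!i,w) * ?y $ w) = (M *\<^sub>v ?y) $ (qs!i)"
        using mv_sum[OF M rv_carrier qn[OF im]] by simp
      finally show ?thesis .
    qed
    finally have "M $$ (qs!i, qs!Suc i) * x $ (qs ! Suc i) = 0"
      using y0 KUs(3)[OF x qU[OF im]] by simp
    then show ?thesis using pathnz[of i] i unfolding m_def by simp
  qed
  define ss where "ss = 0 # map Suc (filter (\<lambda>i. i \<in> I \<and> Suc i < m) [0..<m])"
  have m0: "0 < m" using qne unfolding m_def by auto
  have ssm: "s < m" if "s \<in> set ss" for s using that m0 unfolding ss_def by auto
  have allz: "\<forall>l\<le>i. l < m \<longrightarrow> x $ (qs ! l) = 0"
    if x: "x \<in> KS M n U" and st: "\<forall>s\<in>set ss. x $ (qs ! s) = 0" for x i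
  proof (induction i)
    case 0 then show ?case using st unfolding ss_def by auto
  next
    case (Suc i)
    have "x $ (qs ! Suc i) = 0" if si: "Suc i < m"
    proof (cases "i \<in> I")
      case True
      then have "Suc i \<in> set ss" using si unfolding ss_def by auto
      then show ?thesis using st by auto
    next
      case False
      show ?thesis
      proof (rule prp[OF x si False])
        show "x $ (qs ! i) = 0" using Suc.IH si by auto
        show "i = 0 \<or> x $ (qs ! (i - 1)) = 0" using Suc.IH si by auto
      qed
    qed
    then show ?case using Suc.IH le_Suc_eq by auto
  qed
  define ws1 :: "'a vec list" where "ws1 = map (\<lambda>s. unit_vec n (qs!s)) ss"
  define gs where "gs = map (\<lambda>i. row M (qs!i)) [0..<m]"
  define L where "L = filter (\<lambda>i. i \<in> I) [0..<m]"
  define gsI where "gsI = map (\<lambda>i. row M (qs!i)) L"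
  have ws1c: "set ws1 \<subseteq> carrier_vec n" unfolding ws1_def by auto
  have gsc: "set gs \<subseteq> carrier_vec n" unfolding gs_def using M by auto
  have gsIc: "set gsI \<subseteq> carrier_vec n" unfolding gsI_def using M by auto
  have rowmv: "row M u \<bullet> x = (M *\<^sub>v x) $ u" if "u < n" for u x
    using M that by (simp add: index_mult_mat_vec)
  have K1: "mat_kernel (mat_of_rows n (rowsU M n U @ ws1)) = mat_kernel (mat_of_rows n (rowsU M n R @ gs))"
  proof -
    have L1: "mat_kernel (mat_of_rows n (rowsU M n U @ ws1)) = {x \<in> KS M n U. \<forall>s\<in>set ss. x $ (qs ! s) = 0}"
      unfolding ker_rowsU[OF M ws1c] unfolding ws1_def KS_def
      using ssm qn by auto
    have L2: "mat_kernel (mat_of_rows n (rowsU M n R @ gs)) = {x \<in> KS M n R. \<forall>i<m. (M *\<^sub>v x) $ (qs ! i) = 0}"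
      unfolding ker_rowsU[OF M gsc] unfolding gs_def using rowmv qn by auto
    show ?thesis unfolding L1 L2
    proof (intro equalityI subsetI)
      fix x assume "x \<in> {x \<in> KS M n U. \<forall>s\<in>set ss. x $ (qs ! s) = 0}"
      then have x: "x \<in> KS M n U" "\<forall>s\<in>set ss. x $ (qs ! s) = 0" by auto
      have az: "x $ (qs ! l) = 0" if "l < m" for l using allz[OF x, of l] that by auto
      have "x \<in> KS M n R"
        unfolding KS_def using KUs[OF x(1)] az RU inR by auto
      moreover have "\<forall>i<m. (M *\<^sub>v x) $ (qs ! i) = 0" using KUs(3)[OF x(1)] qU by auto
      ultimately show "x \<in> {x \<in> KS M n R. \<forall>i<m. (M *\<^sub>v x) $ (qs ! i) = 0}" by auto
    next
      fix x assume "x \<in> {x \<in> KS M n R. \<forall>i<m. (M *\<^sub>v x) $ (qs ! i) = 0}"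
      then have x: "x \<in> KS M n R" "\<forall>i<m. (M *\<^sub>v x) $ (qs ! i) = 0" by auto
      have "x \<in> KS M n U"
      proof -
        have "(M *\<^sub>v x) $ u = 0" if uU: "u \<in> U" for u
        proof (cases "u \<in> R")
          case True then show ?thesis using KRs(3)[OF x(1)] by auto
        next
          case False then obtain i where "i < m" "u = qs ! i" using inR uU by auto
          then show ?thesis using x(2) by auto
        qed
        then show ?thesis unfolding KS_def using KRs[OF x(1)] RU by auto
      qed
      moreover have "\<forall>s\<in>set ss. x $ (qs ! s) = 0" using KRs(2)[OF x(1)] ssm qn qR by auto
      ultimately show "x \<in> {x \<in> KS M n U. \<forall>s\<in>set ss. x $ (qs ! s) = 0}" by auto
    qed
  qed
  have K2: "mat_kernel (mat_of_rows n (rowsU M n R @ gs)) = mat_kernel (mat_of_rows n (rowsU M n R @ gsI))"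
    unfolding ker_rowsU[OF M gsc] ker_rowsU[OF M gsIc] unfolding gs_def gsI_def L_def
    using gI rowmv qn by fastforce
  have distL: "distinct L" unfolding L_def by auto
  have Lm: "i \<in> set L \<Longrightarrow> i \<in> I" for i unfolding L_def by auto
  have K3: "nul M n R = kernel_dim (mat_of_rows n (rowsU M n R @ gsI)) + length gsI"
    unfolding nul_def
  proof (rule kd_rows_eq[OF rowsU_carrier[OF M] gsIc])
    fix i assume i: "i < length gsI"
    then have iL: "i < length L" unfolding gsI_def by auto
    from wit[OF Lm[OF nth_mem[OF iL]]] obtain z where z: "z\<in>KS M n R"
      "(M *\<^sub>v z) $ (qs!(L!i)) \<noteq> 0" "\<forall>j<m. j \<noteq> L!i \<longrightarrow> (M *\<^sub>v z) $ (qs!j) = 0" by auto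
    have Lmm: "L ! j < m" if "j < length L" for j using nth_mem[OF that] unfolding L_def by auto
    show "\<exists>x\<in>mat_kernel (mat_of_rows n (rowsU M n R)).
          gsI ! i \<bullet> x \<noteq> 0 \<and> (\<forall>j<length gsI. j \<noteq> i \<longrightarrow> gsI ! j \<bullet> x = 0)"
    proof (intro bexI[of _ z] conjI allI impI)
      show "z \<in> mat_kernel (mat_of_rows n (rowsU M n R))" using z(1) ker_rowsU0[OF M] by auto
      show "gsI ! i \<bullet> z \<noteq> 0" using z(2) iL rowmv qn Lmm unfolding gsI_def by auto
      fix j assume j: "j < length gsI" "j \<noteq> i"
      then have jL: "j < length L" unfolding gsI_def by auto
      have "L ! j \<noteq> L ! i" using distL jL iL j(2) nth_eq_iff_index_eq by blast
      then show "gsI ! j \<bullet> z = 0" using z(3) jL rowmv qn Lmm unfolding gsI_def by auto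
    qed
  qed
  have lenws: "length ws1 \<le> length gsI + 1"
  proof -
    have "filter (\<lambda>i. i \<in> I \<and> Suc i < m) [0..<m] = filter (\<lambda>i. Suc i < m) L"
      unfolding L_def by (simp add: filter_filter conj_commute)
    then have "length (filter (\<lambda>i. i \<in> I \<and> Suc i < m) [0..<m]) \<le> length L"
      by (metis length_filter_le)
    then show ?thesis unfolding ws1_def ss_def gsI_def by simp
  qed
  have "nul M n U \<le> kernel_dim (mat_of_rows n (rowsU M n U @ ws1)) + length ws1"
    unfolding nul_def by (rule kd_rows_le[OF rowsU_carrier[OF M] ws1c])
  also have "kernel_dim (mat_of_rows n (rowsU M n U @ ws1)) = kernel_dim (mat_of_rows n (rowsU M n R @ gsI))"
    by (rule kernel_dim_cong) (auto simp: K1 K2)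
  finally show ?thesis using K3 lenws unfolding R_def by linarith
qed

definition adjS :: "(nat \<Rightarrow> nat \<Rightarrow> bool) \<Rightarrow> nat set \<Rightarrow> nat \<Rightarrow> nat \<Rightarrow> bool" where
  "adjS E S a b \<longleftrightarrow> a \<in> S \<and> b \<in> S \<and> E a b"

lemma walk_rtr: "walk_in E S xs \<Longrightarrow> (adjS E S)\<^sup>*\<^sup>* (hd xs) (last xs)"
proof (induction xs)
  case Nil then show ?case by (simp add: walk_in_def)
next
  case (Cons x ys)
  show ?case
  proof (cases "ys = []")
    case True then show ?thesis by simp
  next
    case False
    have w: "walk_in E S ys" unfolding walk_in_def
    proof (intro conjI allI impI)
      show "ys \<noteq> []" "set ys \<subseteq> S" using Cons.prems False unfolding walk_in_def by auto
      fix k assume "Suc k < length ys"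
      then have "Suc (Suc k) < length (x # ys)" by simp
      then have "E ((x#ys) ! Suc k) ((x#ys) ! Suc (Suc k))" using Cons.prems unfolding walk_in_def by blast
      then show "E (ys ! k) (ys ! Suc k)" by simp
    qed
    have "E x (hd ys)" using Cons.prems False unfolding walk_in_def
      by (metis One_nat_def Suc_less_eq hd_conv_nth length_Cons length_greater_0_conv nth_Cons_0 nth_Cons_Suc)
    moreover have "x \<in> S" "hd ys \<in> S" using Cons.prems False unfolding walk_in_def by auto
    ultimately have "adjS E S x (hd ys)" unfolding adjS_def by auto
    then show ?thesis using Cons.IH[OF w] False by (auto intro: converse_rtranclp_into_rtranclp)
  qed
qed

lemma rtr_walk: "(adjS E S)\<^sup>*\<^sup>* u v \<Longrightarrow> u \<in> S \<Longrightarrow> \<exists>xs. walk_in E S xs \<and> hd xs = u \<and> last xs = v"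
proof (induction rule: converse_rtranclp_induct)
  case base then show ?case by (intro exI[of _ "[v]"]) (auto simp: walk_in_def)
next
  case (step u w)
  then have "w \<in> S" "u \<in> S" "E u w" unfolding adjS_def by auto
  with step.IH obtain xs where xs: "walk_in E S xs" "hd xs = w" "last xs = v" by auto
  have "walk_in E S (u # xs)" unfolding walk_in_def
  proof (intro conjI allI impI)
    show "u # xs \<noteq> []" by simp
    show "set (u # xs) \<subseteq> S" using xs \<open>u \<in> S\<close> unfolding walk_in_def by auto
    fix k assume k: "Suc k < length (u # xs)"
    show "E ((u # xs) ! k) ((u # xs) ! Suc k)"
    proof (cases k)
      case 0 then show ?thesis using xs \<open>E u w\<close> unfolding walk_in_def by (simp add: hd_conv_nth)
    next
      case (Suc j) then show ?thesis using xs k unfolding walk_in_def by simp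
    qed
  qed
  moreover have "xs \<noteq> []" using xs(1) unfolding walk_in_def by auto
  ultimately show ?case using xs by (intro exI[of _ "u # xs"]) auto
qed

lemma connected_iff: "connected_in E S \<longleftrightarrow> (\<forall>u\<in>S. \<forall>v\<in>S. (adjS E S)\<^sup>*\<^sup>* u v)"
  unfolding connected_in_def using walk_rtr rtr_walk by metis

definition dst :: "(nat \<Rightarrow> nat \<Rightarrow> bool) \<Rightarrow> nat \<Rightarrow> nat \<Rightarrow> nat" where
  "dst P \<rho> v = (LEAST k. (P ^^ k) v \<rho>)"
definition par :: "(nat \<Rightarrow> nat \<Rightarrow> bool) \<Rightarrow> nat \<Rightarrow> nat \<Rightarrow> nat" where
  "par P \<rho> v = (SOME w. P v w \<and> (P ^^ (dst P \<rho> v - 1)) w \<rho>)"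

lemma parent_struct:
  fixes P :: "nat \<Rightarrow> nat \<Rightarrow> bool"
  assumes reach: "v \<in> V" "\<forall>v\<in>V. P\<^sup>*\<^sup>* v \<rho>" and vr: "v \<noteq> \<rho>"
  defines "d \<equiv> dst P \<rho>"
  defines "p \<equiv> par P \<rho>"
  shows "P v (p v) \<and> d v = Suc (d (p v))"
proof -
  have ex: "\<exists>k. (P ^^ k) v \<rho>" using reach rtranclp_power by metis
  then have dv: "(P ^^ d v) v \<rho>" unfolding d_def dst_def by (rule LeastI_ex)
  have "d v \<noteq> 0" using dv vr by (metis relpowp_0_E)
  then obtain k where k: "d v = Suc k" using not0_implies_Suc by blast
  then obtain w where "P v w" "(P ^^ k) w \<rho>" using dv relpowp_Suc_D2 by metis
  then have ex2: "\<exists>w. P v w \<and> (P ^^ (d v - 1)) w \<rho>" using k by auto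
  then have pv: "P v (p v) \<and> (P ^^ (d v - 1)) (p v) \<rho>" unfolding p_def par_def d_def by (rule someI_ex)
  have le1: "d (p v) \<le> d v - 1" using pv unfolding d_def by (metis Least_le dst_def)
  have dpv: "(P ^^ d (p v)) (p v) \<rho>" unfolding d_def dst_def using pv by (metis LeastI)
  have "(P ^^ Suc (d (p v))) v \<rho>" using pv dpv relpowp_Suc_I2 by metis
  then have "d v \<le> Suc (d (p v))" unfolding d_def dst_def by (simp add: Least_le)
  then show ?thesis using le1 pv k by auto
qed

lemma minmax_eq: "((min a b, max a b) = (min c d, max c d)) \<longleftrightarrow> {a,b} = {c,(d::nat)}"
  by (auto simp: min_def max_def doubleton_eq_iff)
lemma minmax_edge: "a \<noteq> b \<Longrightarrow> E a b \<Longrightarrow> E b a \<Longrightarrow> (a::nat) \<in> V \<Longrightarrow> b \<in> V \<Longrightarrow>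
   (min a b, max a b) \<in> edges_in E V"
  unfolding edges_in_def by (cases "a < b") (auto simp: min_def max_def)
lemma finite_edges: "finite V \<Longrightarrow> finite (edges_in E V)"
  by (rule finite_subset[of _ "V \<times> V"]) (auto simp: edges_in_def)

lemma conn_edges:
  assumes fin: "finite V" and rho: "\<rho> \<in> V" and reach: "\<forall>v\<in>V. (adjS E V)\<^sup>*\<^sup>* v \<rho>"
    and sym: "\<And>a b. E a b \<Longrightarrow> E b a"
  shows "card V - 1 \<le> card (edges_in E V)"
    and "card (edges_in E V) = card V - 1 \<Longrightarrow> a \<in> V \<Longrightarrow> b \<in> V \<Longrightarrow> E a b \<Longrightarrow> a \<noteq> b \<Longrightarrow>
         (a \<noteq> \<rho> \<and> b = par (adjS E V) \<rho> a) \<or> (b \<noteq> \<rho> \<and> a = par (adjS E V) \<rho> b)"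
proof -
  let ?P = "adjS E V"
  let ?d = "dst ?P \<rho>" and ?p = "par ?P \<rho>"
  have ps: "?P v (?p v) \<and> ?d v = Suc (?d (?p v))" if "v \<in> V" "v \<noteq> \<rho>" for v
    using parent_struct[OF that(1) reach that(2)] .
  define \<phi> where "\<phi> = (\<lambda>v. (min v (?p v), max v (?p v)))"
  have inj: "inj_on \<phi> (V - {\<rho>})"
  proof (rule inj_onI)
    fix v v' assume v: "v \<in> V - {\<rho>}" and v': "v' \<in> V - {\<rho>}" and eq: "\<phi> v = \<phi> v'"
    show "v = v'"
    proof (rule ccontr)
      assume ne: "v \<noteq> v'"
      from eq have "{v, ?p v} = {v', ?p v'}" unfolding \<phi>_def minmax_eq .
      with ne have e: "v = ?p v'" "v' = ?p v" by (auto simp: doubleton_eq_iff)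
      have "?d v = Suc (?d (?p v))" "?d v' = Suc (?d (?p v'))" using ps v v' by auto
      then show False unfolding e(1)[symmetric] e(2)[symmetric] by simp
    qed
  qed
  have finE: "finite (edges_in E V)" using finite_edges[OF fin] .
  have img: "\<phi> ` (V - {\<rho>}) \<subseteq> edges_in E V"
  proof
    fix e assume "e \<in> \<phi> ` (V - {\<rho>})"
    then obtain v where v: "v \<in> V" "v \<noteq> \<rho>" "e = \<phi> v" by blast
    from ps[OF v(1,2)] have pv: "?p v \<in> V" "E v (?p v)" "v \<noteq> ?p v" unfolding adjS_def by auto
    then show "e \<in> edges_in E V" unfolding v(3) \<phi>_def using minmax_edge[of v "?p v" E V] v sym by blast
  qed
  have cV: "card (V - {\<rho>}) = card V - 1" using rho fin by simp
  have cimg: "card (\<phi> ` (V - {\<rho>})) = card V - 1" using card_image[OF inj] cV by simp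
  show "card V - 1 \<le> card (edges_in E V)" using card_mono[OF finE img] cimg by simp
  assume ce: "card (edges_in E V) = card V - 1" and ab: "a \<in> V" "b \<in> V" "E a b" "a \<noteq> b"
  have eqs: "\<phi> ` (V - {\<rho>}) = edges_in E V"
    using card_subset_eq[OF finE img] cimg ce by simp
  have "(min a b, max a b) \<in> edges_in E V" using minmax_edge[of a b E V] ab sym by blast
  then have "(min a b, max a b) \<in> \<phi> ` (V - {\<rho>})" using eqs by simp
  then obtain v where v0: "v \<in> V - {\<rho>}" "(min a b, max a b) = \<phi> v" by (rule imageE)
  then have v: "v \<in> V" "v \<noteq> \<rho>" "\<phi> v = (min a b, max a b)" by auto
  from v(3) have "{v, ?p v} = {a, b}" unfolding \<phi>_def minmax_eq .
  then have "(a = v \<and> b = ?p v) \<or> (b = v \<and> a = ?p v)" using ab(4) by (auto simp: doubleton_eq_iff)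
  then show "(a \<noteq> \<rho> \<and> b = ?p a) \<or> (b \<noteq> \<rho> \<and> a = ?p b)" using v by blast
qed

lemma rtranclp_sym:
  assumes "\<And>x y. Q x y \<Longrightarrow> Q y x" "Q\<^sup>*\<^sup>* x y" shows "Q\<^sup>*\<^sup>* y x"
  using assms(2)
proof (induction rule: rtranclp_induct)
  case base then show ?case by simp
next
  case (step y z) then show ?case using assms(1) by (meson converse_rtranclp_into_rtranclp)
qed

lemma bridge:
  assumes fin: "finite V" and conn: "\<forall>u\<in>V. \<forall>v\<in>V. (adjS E V)\<^sup>*\<^sup>* u v"
    and sym: "\<And>x y. E x y \<Longrightarrow> E y x"
    and tree: "card (edges_in E V) = card V - 1"
    and ab: "a \<in> V" "b \<in> V" "E a b" "a \<noteq> b"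
    and walk: "(adjS (\<lambda>x y. E x y \<and> {x,y} \<noteq> {a,b}) V)\<^sup>*\<^sup>* a b"
  shows False
proof -
  define E' where "E' = (\<lambda>x y. E x y \<and> {x,y} \<noteq> {a,b})"
  let ?Q = "adjS E' V"
  have Qsym: "?Q x y \<Longrightarrow> ?Q y x" for x y unfolding adjS_def E'_def using sym by (auto simp: insert_commute)
  have ab': "?Q\<^sup>*\<^sup>* a b" using walk unfolding E'_def .
  have ba': "?Q\<^sup>*\<^sup>* b a" using rtranclp_sym[of ?Q, OF Qsym ab'] by blast
  have stepQ: "?Q\<^sup>*\<^sup>* x y" if "adjS E V x y" for x y
  proof (cases "{x,y} = {a,b}")
    case True
    then have "(x = a \<and> y = b) \<or> (x = b \<and> y = a)" by (auto simp: doubleton_eq_iff)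
    then show ?thesis using ab' ba' by auto
  next
    case False then show ?thesis using that unfolding adjS_def E'_def by auto
  qed
  have reach: "\<forall>v\<in>V. ?Q\<^sup>*\<^sup>* v a"
  proof
    fix v assume v: "v \<in> V"
    have "(adjS E V)\<^sup>*\<^sup>* v a" using conn v ab by auto
    then show "?Q\<^sup>*\<^sup>* v a"
    proof (induction rule: rtranclp_induct)
      case base then show ?case by simp
    next
      case (step y z)
      have "?Q\<^sup>*\<^sup>* y z" using step.hyps(2) by (rule stepQ)
      with step.IH show ?case by (rule rtranclp_trans)
    qed
  qed
  have E'sym: "E' x y \<Longrightarrow> E' y x" for x y unfolding E'_def using sym by (auto simp: insert_commute)
  have c1: "card V - 1 \<le> card (edges_in E' V)" using conn_edges(1)[OF fin ab(1) reach E'sym] .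
  have finE: "finite (edges_in E V)" using finite_edges[OF fin] .
  have mem: "(min a b, max a b) \<in> edges_in E V" using minmax_edge[of a b E V] ab sym by blast
  have sub: "edges_in E' V \<subseteq> edges_in E V - {(min a b, max a b)}"
  proof
    fix e assume e: "e \<in> edges_in E' V"
    then obtain i j where ij: "e = (i,j)" "i \<in> V" "j \<in> V" "i < j" "E' i j" unfolding edges_in_def by auto
    then have "{i,j} \<noteq> {a,b}" unfolding E'_def by auto
    then have "(i,j) \<noteq> (min a b, max a b)" using ab(4) by (auto simp: min_def max_def doubleton_eq_iff)
    moreover have "(i,j) \<in> edges_in E V" using ij unfolding edges_in_def E'_def by auto
    ultimately show "e \<in> edges_in E V - {(min a b, max a b)}" using ij by auto
  qed
  have "card (edges_in E' V) \<le> card (edges_in E V) - 1"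
    using card_mono[OF _ sub] finE mem by (simp add: card_Diff_singleton)
  moreover have "card V \<ge> 2"
  proof -
    have "{a,b} \<subseteq> V" using ab by auto
    then have "card {a,b} \<le> card V" using card_mono fin by blast
    then show ?thesis using ab(4) by simp
  qed
  ultimately show False using c1 tree by linarith
qed

lemma kd_zero:
  fixes A :: "'a::field mat"
  assumes A: "A \<in> carrier_mat nr nc" and z: "mat_kernel A = {0\<^sub>v nc}"
  shows "kernel_dim A = 0"
proof -
  interpret K: kernel nr nc A by (unfold_locales) (rule A)
  have "K.Ker.span {} = {0\<^sub>v nc}" using K.Ker.span_empty by simp
  then have "K.Ker.gen_set {}" using z by simp
  then have "card {} \<ge> K.dim" using K.Ker.gen_ge_dim[of "{}"] by simp
  then show ?thesis using K.kernel_dim by simp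
qed

lemma tree_facts:
  assumes "is_tree n E"
  shows "finite {0..<n}" "{0..<n::nat} \<noteq> {}" "\<forall>u\<in>{0..<n}. \<forall>v\<in>{0..<n}. (adjS E {0..<n})\<^sup>*\<^sup>* u v"
    "\<And>a b. E a b \<Longrightarrow> E b a" "\<And>a b. E a b \<Longrightarrow> a < n \<and> b < n \<and> a \<noteq> b"
    "card (edges_in E {0..<n}) = card {0..<n} - 1"
  using assms unfolding is_tree_def is_tree_on_def simple_graph_def connected_iff by auto

lemma path_walk:
  assumes "\<And>t. k \<le> t \<Longrightarrow> Suc t \<le> l \<Longrightarrow> Q (qs!t) (qs!Suc t)" "k \<le> l"
  shows "Q\<^sup>*\<^sup>* (qs!k) (qs!l)"
  using assms(2,1)
proof (induction l rule: dec_induct)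
  case base then show ?case by simp
next
  case (step l)
  then have "Q\<^sup>*\<^sup>* (qs!k) (qs!l)" by simp
  moreover have "Q (qs!l) (qs!Suc l)" using step by simp
  ultimately show ?case by (rule rtranclp.rtrancl_into_rtrancl)
qed

lemma attach_tree:
  assumes tree: "is_tree n E" and U: "U \<subseteq> {0..<n}"
    and dq: "distinct qs" and qsU: "set qs \<subseteq> U"
    and path: "\<And>k l. k < length qs \<Longrightarrow> l < length qs \<Longrightarrow> E (qs!k) (qs!l) \<longleftrightarrow> (l = Suc k \<or> k = Suc l)"
    and ij: "i < length qs" "j < length qs" "j \<noteq> i"
    and r: "r \<in> U - set qs" "(adjS E ((U - set qs) \<union> {qs!i}))\<^sup>*\<^sup>* (qs!i) r"
    and e: "E (qs!j) r"
  shows False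
proof -
  note tf = tree_facts[OF tree]
  let ?V = "{0..<n}"
  let ?R = "U - set qs"
  have qV: "qs!t \<in> ?V" if "t < length qs" for t using that qsU U nth_mem by fastforce
  have qinj: "qs ! t = qs ! t' \<longleftrightarrow> t = t'" if "t < length qs" "t' < length qs" for t t'
    using dq that nth_eq_iff_index_eq by blast
  have rV: "r \<in> ?V" using r U by auto
  have rq: "r \<noteq> qs!t" if "t < length qs" for t using r(1) that nth_mem by fastforce
  have main: False if ab: "a = qs!t" "b = qs!Suc t" "Suc t < length qs"
     and w: "(adjS (\<lambda>x y. E x y \<and> {x,y} \<noteq> {a,b}) ?V)\<^sup>*\<^sup>* a b" for a b t
  proof (rule bridge[OF tf(1) tf(3) tf(4) tf(6) _ _ _ _ w])
    show "a \<in> ?V" "b \<in> ?V" using ab qV by auto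
    show "E a b" using path[of t "Suc t"] ab by auto
    show "a \<noteq> b" using qinj[of t "Suc t"] ab by auto
  qed
  let ?E' = "\<lambda>a b x y. E x y \<and> {x,y} \<noteq> {a,b}"
  have Qsym: "adjS (?E' a b) ?V x y \<Longrightarrow> adjS (?E' a b) ?V y x" for a b x y
    unfolding adjS_def using tf(4) by (auto simp: insert_commute)
  have lift: "(adjS (?E' a b) ?V)\<^sup>*\<^sup>* (qs!i) r" if "b \<notin> ?R \<union> {qs!i}" for a b
  proof -
    have st: "adjS E (?R \<union> {qs!i}) x y \<Longrightarrow> adjS (?E' a b) ?V x y" for x y
      using that U qV[OF ij(1)] unfolding adjS_def by auto
    show ?thesis using r(2)
    proof (induction rule: rtranclp_induct)
      case base then show ?case by simp
    next
      case (step y z)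
      from step.IH st[OF step.hyps(2)] show ?case by (rule rtranclp.rtrancl_into_rtrancl)
    qed
  qed
  have path_step: "adjS (?E' a b) ?V (qs!t) (qs!Suc t)"
    if "Suc t < length qs" "{qs!t, qs!Suc t} \<noteq> {a,b}" for a b t
    using that qV path[of t "Suc t"] unfolding adjS_def by auto
  show False
  proof (cases "i < j")
    case True
    define t where "t = j - 1"
    have t: "Suc t = j" "Suc t < length qs" using True ij unfolding t_def by auto
    let ?a = "qs!t" and ?b = "qs!Suc t"
    have w1: "(adjS (?E' ?a ?b) ?V)\<^sup>*\<^sup>* (qs!i) ?a"
    proof (rule path_walk)
      show "i \<le> t" using True t by auto
      fix s assume s: "i \<le> s" "Suc s \<le> t"
      have "qs!Suc t \<noteq> qs!s" "qs!Suc t \<noteq> qs!Suc s" using qinj t s by auto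
      then have "{qs!s, qs!Suc s} \<noteq> {?a,?b}" by (auto simp: doubleton_eq_iff)
      then show "adjS (?E' ?a ?b) ?V (qs!s) (qs!Suc s)" using path_step s t by auto
    qed
    have w1': "(adjS (?E' ?a ?b) ?V)\<^sup>*\<^sup>* ?a (qs!i)" using rtranclp_sym[OF Qsym w1] .
    have "?b \<notin> ?R \<union> {qs!i}" using t qinj ij nth_mem by auto
    then have w2: "(adjS (?E' ?a ?b) ?V)\<^sup>*\<^sup>* (qs!i) r" by (rule lift)
    have ne: "r \<noteq> ?a" "r \<noteq> ?b" using rq t by auto
    have "{r, ?b} \<noteq> {?a, ?b}"
    proof
      assume "{r, ?b} = {?a, ?b}" then have "r \<in> {?a, ?b}" by blast
      then show False using ne by blast
    qed
    moreover have "E r ?b" using e tf(4) t by simp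
    ultimately have st: "adjS (?E' ?a ?b) ?V r ?b" using rV qV t unfolding adjS_def by simp
    have "(adjS (?E' ?a ?b) ?V)\<^sup>*\<^sup>* ?a r" by (rule rtranclp_trans[OF w1' w2])
    then have "(adjS (?E' ?a ?b) ?V)\<^sup>*\<^sup>* ?a ?b" using st by (rule rtranclp.rtrancl_into_rtrancl)
    then show False using main[of ?a t ?b] t by auto
  next
    case False
    then have ji: "j < i" using ij by auto
    let ?a = "qs!j" and ?b = "qs!Suc j"
    have sj: "Suc j < length qs" using ji ij by auto
    have w1: "(adjS (?E' ?a ?b) ?V)\<^sup>*\<^sup>* ?b (qs!i)"
    proof (rule path_walk)
      show "Suc j \<le> i" using ji by auto
      fix s assume s: "Suc j \<le> s" "Suc s \<le> i"
      have "qs!j \<noteq> qs!s" "qs!j \<noteq> qs!Suc s" using qinj s ij by auto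
      then have "{qs!s, qs!Suc s} \<noteq> {?a,?b}" by (auto simp: doubleton_eq_iff)
      then show "adjS (?E' ?a ?b) ?V (qs!s) (qs!Suc s)" using path_step s ij by auto
    qed
    have "?a \<notin> ?R \<union> {qs!i}" using qinj ij nth_mem by auto
    then have w2: "(adjS (?E' ?b ?a) ?V)\<^sup>*\<^sup>* (qs!i) r" by (rule lift)
    have ee: "?E' ?b ?a = ?E' ?a ?b" by (auto simp: insert_commute)
    have ne: "r \<noteq> ?a" "r \<noteq> ?b" using rq ij sj by auto
    have "{r, ?a} \<noteq> {?a, ?b}"
    proof
      assume "{r, ?a} = {?a, ?b}" then have "r \<in> {?a, ?b}" by blast
      then show False using ne by blast
    qed
    moreover have "E r ?a" using e tf(4) by simp
    ultimately have st: "adjS (?E' ?a ?b) ?V r ?a" using rV qV ij unfolding adjS_def by simp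
    have w2': "(adjS (?E' ?a ?b) ?V)\<^sup>*\<^sup>* (qs!i) r" using w2 unfolding ee .
    have "(adjS (?E' ?a ?b) ?V)\<^sup>*\<^sup>* ?b r" by (rule rtranclp_trans[OF w1 w2'])
    then have "(adjS (?E' ?a ?b) ?V)\<^sup>*\<^sup>* ?b ?a" using st by (rule rtranclp.rtrancl_into_rtrancl)
    then have "(adjS (?E' ?a ?b) ?V)\<^sup>*\<^sup>* ?a ?b" by (rule rtranclp_sym[rotated]) (rule Qsym)
    then show False using main[of ?a j ?b] sj by auto
  qed
qed

lemma path_step:
  fixes M :: "'a::field mat"
  assumes tree: "is_tree n E" and M: "M \<in> carrier_mat n n"
    and pat: "\<And>u w. u < n \<Longrightarrow> w < n \<Longrightarrow> u \<noteq> w \<Longrightarrow> (M $$ (u,w) \<noteq> 0 \<longleftrightarrow> E u w)"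
    and U: "U \<subseteq> {0..<n}" and QU: "Q \<subseteq> U" and ip: "induced_path E Q"
  shows "nul M n U \<le> nul M n (U - Q) + 1"
proof -
  note tf = tree_facts[OF tree]
  obtain xs where xs: "xs \<noteq> []" "distinct xs" "set xs = Q" and
    adj: "\<And>k l. k < length xs \<Longrightarrow> l < length xs \<Longrightarrow> (E (xs ! k) (xs ! l) \<longleftrightarrow> (l = Suc k \<or> k = Suc l))"
    using ip unfolding induced_path_def by blast
  define Rs where "Rs = (\<lambda>i. {r \<in> U - set xs. (adjS E ((U - set xs) \<union> {xs!i}))\<^sup>*\<^sup>* (xs!i) r})"
  have qn: "xs ! k < n" if "k < length xs" for k using that xs QU U nth_mem by fastforce
  have "nul M n U \<le> nul M n (U - set xs) + 1"
  proof (rule path_remove[where E=E and Rs=Rs, OF M U])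
    show "set xs \<subseteq> U" "distinct xs" "xs \<noteq> []" using xs QU by auto
    show "E u w" if "u < n" "w < n" "u \<noteq> w" "M $$ (u, w) \<noteq> 0" for u w using pat that by blast
    show "E w u" if "E u w" for u w using tf(4) that by blast
    show "E (xs ! k) (xs ! l) = (l = Suc k \<or> k = Suc l)" if "k < length xs" "l < length xs" for k l
      using adj that by blast
    show "M $$ (xs ! k, xs ! Suc k) \<noteq> 0" if k: "Suc k < length xs" for k
    proof -
      have "E (xs ! k) (xs ! Suc k)" using adj[of k "Suc k"] k by simp
      moreover have "xs ! k \<noteq> xs ! Suc k" using xs(2) k nth_eq_iff_index_eq by fastforce
      ultimately show ?thesis using pat[of "xs!k" "xs!Suc k"] qn k by simp
    qed
    show "Rs i \<subseteq> U - set xs" if "i < length xs" for i unfolding Rs_def by auto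
    show "\<not> E u w" if i: "i < length xs" and u: "u \<in> Rs i" and w: "w \<in> U - set xs - Rs i" for i u w
    proof
      assume "E u w"
      then have "adjS E ((U - set xs) \<union> {xs!i}) u w" using u w unfolding adjS_def Rs_def by auto
      then have "(adjS E ((U - set xs) \<union> {xs!i}))\<^sup>*\<^sup>* (xs!i) w" using u unfolding Rs_def
        by (auto intro: rtranclp.rtrancl_into_rtrancl)
      then show False using w unfolding Rs_def by auto
    qed
    show "\<not> E (xs ! j) r" if "i < length xs" "j < length xs" "j \<noteq> i" "r \<in> Rs i" for i j r
    proof
      assume e: "E (xs ! j) r"
      show False
      proof (rule attach_tree[OF tree U xs(2) _ _ that(1-3) _ _ e])
        show "set xs \<subseteq> U" using xs QU by auto
        show "E (xs ! k) (xs ! l) = (l = Suc k \<or> k = Suc l)" if "k < length xs" "l < length xs" for k l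
          using adj that by blast
        show "r \<in> U - set xs" "(adjS E (U - set xs \<union> {xs ! i}))\<^sup>*\<^sup>* (xs ! i) r" using that(4) unfolding Rs_def by auto
      qed
    qed
    show "r \<in> Rs j" if "j < length xs" "r \<in> U - set xs" "E (xs ! j) r" for j r
    proof -
      have "adjS E ((U - set xs) \<union> {xs!j}) (xs!j) r" using that unfolding adjS_def by auto
      then show ?thesis using that(2) unfolding Rs_def by auto
    qed
  qed
  then show ?thesis using xs by simp
qed

lemma cover_ind:
  fixes M :: "'a::field mat"
  assumes tree: "is_tree n E" and M: "M \<in> carrier_mat n n"
    and pat: "\<And>u w. u < n \<Longrightarrow> w < n \<Longrightarrow> u \<noteq> w \<Longrightarrow> (M $$ (u,w) \<noteq> 0 \<longleftrightarrow> E u w)"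
    and fin: "finite C"
    and XS: "X \<subseteq> {0..<n}" "\<Union>C \<subseteq> {0..<n}" "X \<inter> \<Union>C = {}"
    and ips: "\<forall>Q\<in>C. induced_path E Q"
    and disj: "\<forall>Q1\<in>C. \<forall>Q2\<in>C. Q1 \<noteq> Q2 \<longrightarrow> Q1 \<inter> Q2 = {}"
  shows "nul M n (X \<union> \<Union>C) \<le> nul M n X + card C"
  using fin XS ips disj
proof (induction C rule: finite_induct)
  case empty then show ?case by simp
next
  case (insert Q C)
  have IH: "nul M n (X \<union> \<Union>C) \<le> nul M n X + card C"
    using insert.prems by (intro insert.IH) auto
  let ?U = "X \<union> \<Union>(insert Q C)"
  have "nul M n ?U \<le> nul M n (?U - Q) + 1"
    by (rule path_step[OF tree M pat]) (use insert.prems in auto)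
  moreover have "?U - Q = X \<union> \<Union>C"
  proof -
    have "Q \<inter> \<Union>C = {}" using insert.prems(5) insert.hyps(2) by fastforce
    moreover have "Q \<inter> X = {}" using insert.prems(3) by auto
    ultimately show ?thesis by auto
  qed
  ultimately show ?case using IH insert.hyps by simp
qed

lemma nul_full:
  fixes M :: "'a::field mat"
  assumes M: "M \<in> carrier_mat n n"
  shows "nul M n {0..<n} = kernel_dim M"
proof -
  have "rowsU M n {0..<n} = rows M" unfolding rowsU_def rows_def using M by auto
  then show ?thesis unfolding nul_def using mat_of_rows_rows[of M] M by simp
qed

lemma main_geo:
  fixes M :: "'a::field mat" and Ts :: "nat \<Rightarrow> nat set"
  assumes tree: "is_tree n E" and M: "M \<in> carrier_mat n n"
    and pat: "\<And>u w. u < n \<Longrightarrow> w < n \<Longrightarrow> u \<noteq> w \<Longrightarrow> (M $$ (u,w) \<noteq> 0 \<longleftrightarrow> E u w)"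
    and sub: "\<And>i. i < c \<Longrightarrow> is_subtree n E (Ts i)"
    and indep: "\<And>i j. i < c \<Longrightarrow> j < c \<Longrightarrow> i \<noteq> j \<Longrightarrow> independent E (Ts i) (Ts j)"
    and nz: "\<And>i. i < c \<Longrightarrow> KS M n (Ts i) = {0\<^sub>v n}"
  shows "kernel_dim M \<le> path_cover_number E ({0..<n} - (\<Union>i<c. Ts i))"
proof -
  note tf = tree_facts[OF tree]
  define X where "X = (\<Union>i<c. Ts i)"
  define S where "S = {0..<n} - X"
  have TsV: "Ts i \<subseteq> {0..<n}" if "i < c" for i using sub[OF that] unfolding is_subtree_def by auto
  have XV: "X \<subseteq> {0..<n}" unfolding X_def using TsV by auto
  have ex: "\<exists>C. path_cover E S C \<and> finite C \<and> card C = card ((\<lambda>v. {v}) ` S)"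
  proof (intro exI conjI)
    show "path_cover E S ((\<lambda>v. {v}) ` S)" unfolding path_cover_def
    proof (intro conjI ballI impI)
      show "\<Union> ((\<lambda>v. {v}) ` S) = S" by auto
      fix Q assume "Q \<in> (\<lambda>v. {v}) ` S"
      then obtain v where v: "Q = {v}" by auto
      show "induced_path E Q" unfolding induced_path_def v
        by (intro exI[of _ "[v]"]) (use tf(5) in auto)
    qed auto
    show "finite ((\<lambda>v. {v}) ` S)" unfolding S_def by auto
  qed simp
  then have "\<exists>k. \<exists>C. path_cover E S C \<and> finite C \<and> card C = k" by blast
  then have "\<exists>C. path_cover E S C \<and> finite C \<and> card C = path_cover_number E S"
    unfolding path_cover_number_def by (rule LeastI_ex)
  then obtain C where C: "path_cover E S C" "finite C" "card C = path_cover_number E S" by blast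
  have "nul M n (X \<union> \<Union>C) \<le> nul M n X + card C"
  proof (rule cover_ind[OF tree M pat C(2) XV])
    show "\<Union>C \<subseteq> {0..<n}" "X \<inter> \<Union>C = {}" "\<forall>Q\<in>C. induced_path E Q"
      "\<forall>Q1\<in>C. \<forall>Q2\<in>C. Q1 \<noteq> Q2 \<longrightarrow> Q1 \<inter> Q2 = {}"
      using C(1) unfolding path_cover_def S_def by auto
  qed
  moreover have "X \<union> \<Union>C = {0..<n}" using C(1) XV unfolding path_cover_def S_def by auto
  moreover have "nul M n X = 0"
  proof -
    have "KS M n X = {0\<^sub>v n}"
    proof
      show "{0\<^sub>v n} \<subseteq> KS M n X" unfolding KS_def using M by auto
      show "KS M n X \<subseteq> {0\<^sub>v n}"
      proof
        fix x assume x: "x \<in> KS M n X"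
        have xc: "x \<in> carrier_vec n" using x unfolding KS_def by auto
        have "x $ u = 0" if u: "u < n" for u
        proof (cases "u \<in> X")
          case False then show ?thesis using x u unfolding KS_def by auto
        next
          case True
          then obtain i where i: "i < c" "u \<in> Ts i" unfolding X_def by auto
          let ?y = "rv n (Ts i) x"
          have "?y \<in> KS M n (Ts i)" unfolding KS_def
          proof (intro CollectI conjI allI impI)
            show "?y \<in> carrier_vec n" by simp
            fix u' assume u': "u' < n"
            show "u' \<notin> Ts i \<Longrightarrow> ?y $ u' = 0" using u' by simp
            assume ui: "u' \<in> Ts i"
            have "(M *\<^sub>v ?y) $ u' = (M *\<^sub>v x) $ u'"
            proof (rule mv_cong[OF M rv_carrier xc u'])
              fix w assume w: "w < n"
              show "M $$ (u', w) * ?y $ w = M $$ (u', w) * x $ w"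
              proof (cases "w \<in> Ts i")
                case False
                have "M $$ (u', w) * x $ w = 0"
                proof (cases "w \<in> X")
                  case False then show ?thesis using x w unfolding KS_def by auto
                next
                  case True
                  then obtain j where j: "j < c" "w \<in> Ts j" unfolding X_def by auto
                  with \<open>w \<notin> Ts i\<close> have ji: "j \<noteq> i" by auto
                  have ind: "independent E (Ts i) (Ts j)" using indep[OF i(1) j(1)] ji by auto
                  then have "\<not> E u' w" "u' \<noteq> w" using ui j unfolding independent_def by auto
                  then show ?thesis using pat[OF u' w] by auto
                qed
                then show ?thesis using False w by simp
              qed (use w in simp)
            qed
            also have "\<dots> = 0" using x ui i u' unfolding KS_def X_def by auto
            finally show "(M *\<^sub>v ?y) $ u' = 0" .
          qed
          then have "?y = 0\<^sub>v n" using nz[OF i(1)] by auto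
          then have "?y $ u = 0" using u by simp
          then show ?thesis using i u by simp
        qed
        then show "x \<in> {0\<^sub>v n}" using xc by auto
      qed
    qed
    have c: "mat_of_rows n (rowsU M n X) \<in> carrier_mat n n"
      using mat_of_rows_carrier(1)[of n "rowsU M n X"] by (simp add: rowsU_def)
    show ?thesis unfolding nul_def by (rule kd_zero[OF c]) (simp add: ker_rowsU0[OF M] \<open>KS M n X = {0\<^sub>v n}\<close>)
  qed
  ultimately show ?thesis using nul_full[OF M] C(3) unfolding X_def S_def by simp
qed

lemma sym_weights:
  fixes A :: "real mat"
  assumes tree: "is_tree n E" and AR: "in_R n E A"
  shows "\<exists>g. (\<forall>u<n. g u > 0) \<and> (\<forall>u<n. \<forall>w<n. g u * A $$ (u,w) = g w * A $$ (w,u))"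
proof -
  note tf = tree_facts[OF tree]
  let ?V = "{0..<n}"
  let ?P = "adjS E ?V"
  define d where "d = dst ?P 0"
  define p where "p = par ?P 0"
  have n0: "0 < n" using tf(2) by auto
  have reach: "\<forall>v\<in>?V. ?P\<^sup>*\<^sup>* v 0" using tf(3) n0 by auto
  have ps: "?P v (p v) \<and> d v = Suc (d (p v))" if "v \<in> ?V" "v \<noteq> 0" for v
    unfolding d_def p_def using parent_struct[OF that(1) reach that(2)] .
  have d0: "d 0 = 0" unfolding d_def dst_def by (rule Least_eq_0) (simp add: relpowp_0_I)
  have iter: "(p ^^ k) v \<in> ?V \<and> d ((p ^^ k) v) = d v - k" if "v \<in> ?V" "k \<le> d v" for v k
    using that(2)
  proof (induction k)
    case 0 then show ?case using that(1) by simp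
  next
    case (Suc k)
    let ?w = "(p ^^ k) v"
    have w: "?w \<in> ?V" "d ?w = d v - k" using Suc by auto
    have "?w \<noteq> 0"
    proof
      assume "?w = 0" then have "d ?w = 0" using d0 by simp
      then show False using w(2) Suc.prems by simp
    qed
    then have "?P ?w (p ?w) \<and> d ?w = Suc (d (p ?w))" using ps w(1) by blast
    then show ?case using w unfolding adjS_def by auto
  qed
  have AR': "A \<in> carrier_mat n n" "\<And>i j. i < n \<Longrightarrow> j < n \<Longrightarrow> i \<noteq> j \<Longrightarrow> (A $$ (i,j) \<noteq> 0 \<longleftrightarrow> E i j)"
    "\<And>i j. i < n \<Longrightarrow> j < n \<Longrightarrow> E i j \<Longrightarrow> A $$ (i,j) * A $$ (j,i) > 0"
    using AR unfolding in_R_def by auto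
  define r where "r = (\<lambda>v. A $$ (p v, v) / A $$ (v, p v))"
  have pv: "p v < n" "E v (p v)" "A $$ (v, p v) * A $$ (p v, v) > 0" if "v \<in> ?V" "v \<noteq> 0" for v
  proof -
    show "p v < n" "E v (p v)" using ps[OF that] unfolding adjS_def by auto
    then show "A $$ (v, p v) * A $$ (p v, v) > 0" using AR'(3) that by auto
  qed
  have rpos: "r v > 0" if "v \<in> ?V" "v \<noteq> 0" for v
  proof -
    have "A $$ (v, p v) * A $$ (p v, v) > 0" using pv[OF that] by auto
    then show ?thesis unfolding r_def by (auto simp: zero_less_mult_iff zero_less_divide_iff)
  qed
  define g where "g = (\<lambda>v. \<Prod>k<d v. r ((p ^^ k) v))"
  have gpos: "g v > 0" if "v < n" for v
    unfolding g_def
  proof (rule prod_pos)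
    fix k assume k: "k \<in> {..<d v}"
    have "(p ^^ k) v \<in> ?V" "d ((p ^^ k) v) = d v - k" using iter[of v k] that k by auto
    moreover have "(p ^^ k) v \<noteq> 0"
    proof
      assume "(p ^^ k) v = 0" then have "d ((p ^^ k) v) = 0" using d0 by simp
      then show False using iter[of v k] that k by simp
    qed
    ultimately show "r ((p ^^ k) v) > 0" using rpos by blast
  qed
  have grec: "g v = r v * g (p v)" if "v \<in> ?V" "v \<noteq> 0" for v
  proof -
    have dv: "d v = Suc (d (p v))" using ps[OF that] by auto
    have "g v = (\<Prod>k<Suc (d (p v)). r ((p ^^ k) v))" unfolding g_def dv ..
    also have "\<dots> = r v * (\<Prod>k<d (p v). r ((p ^^ Suc k) v))" by (subst prod.lessThan_Suc_shift) simp
    also have "(\<Prod>k<d (p v). r ((p ^^ Suc k) v)) = g (p v)" unfolding g_def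
      by (intro prod.cong refl) (simp add: funpow_swap1)
    finally show ?thesis .
  qed
  have gedge: "g v * A $$ (v, p v) = g (p v) * A $$ (p v, v)" if "v \<in> ?V" "v \<noteq> 0" for v
  proof -
    have nz: "A $$ (v, p v) \<noteq> 0" using pv[OF that] by auto
    show ?thesis using grec[OF that] nz unfolding r_def by (simp add: field_simps)
  qed
  have "g u * A $$ (u,w) = g w * A $$ (w,u)" if u: "u < n" and w: "w < n" for u w
  proof (cases "u = w")
    case True then show ?thesis by simp
  next
    case False
    show ?thesis
    proof (cases "E u w")
      case True
      have "(u \<noteq> 0 \<and> w = par ?P 0 u) \<or> (w \<noteq> 0 \<and> u = par ?P 0 w)"
        using conn_edges(2)[OF tf(1) _ reach tf(4) tf(6)] u w True False n0 by auto
      then show ?thesis using gedge u w unfolding p_def by auto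
    next
      case nE: False
      have "\<not> E w u" using nE tf(4) by blast
      then show ?thesis using AR'(2)[OF u w False] AR'(2)[OF w u] False nE u w by auto
    qed
  qed
  then show ?thesis using gpos by blast
qed

lemma order_jordan_prod:
  fixes L :: "(nat \<times> 'a::idom) list"
  shows "Polynomial.order \<nu> (\<Prod>(n,a)\<leftarrow>L. [:- a, 1:] ^ n) = sum_list (map fst [(n,a)\<leftarrow>L. a = \<nu>])"
proof (induction L)
  case Nil
  have "Polynomial.order \<nu> (1::'a poly) = 0" by (rule order_0I) simp
  then show ?case by simp
next
  case (Cons na L)
  obtain n a where na: "na = (n,a)" by fastforce
  let ?P = "(\<Prod>(n,a)\<leftarrow>L. [:- a, 1:] ^ n)"
  have nz1: "[:- a, 1:] ^ n \<noteq> 0" by simp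
  have nz2: "?P \<noteq> 0" by (induction L) auto
  have "Polynomial.order \<nu> ([:- a, 1:] ^ n * ?P) = Polynomial.order \<nu> ([:- a, 1:] ^ n) + Polynomial.order \<nu> ?P"
    using nz1 nz2 by (simp add: order_mult)
  moreover have "Polynomial.order \<nu> ([:- a, 1:] ^ n) = (if a = \<nu> then n else 0)"
  proof (cases "a = \<nu>")
    case True then show ?thesis using order_power_n_n by simp
  next
    case False
    have "poly ([:- a, 1:] ^ n) \<nu> \<noteq> 0" using False by (simp add: poly_power)
    then show ?thesis using False order_0I by metis
  qed
  ultimately show ?case using Cons na by simp
qed

lemma no_chain:
  fixes A :: "real mat" and g :: "nat \<Rightarrow> real" and \<mu> :: real
  assumes A: "A \<in> carrier_mat n n" and gpos: "\<And>u. u < n \<Longrightarrow> g u > 0"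
    and gsym: "\<And>u w. u < n \<Longrightarrow> w < n \<Longrightarrow> g u * A $$ (u,w) = g w * A $$ (w,u)"
    and x: "x \<in> carrier_vec n"
    and C: "C = char_matrix (map_mat complex_of_real A) (complex_of_real \<mu>)"
    and cc: "C *\<^sub>v (C *\<^sub>v x) = 0\<^sub>v n"
  shows "C *\<^sub>v x = 0\<^sub>v n"
proof -
  define B where "B = (\<lambda>u w. A $$ (u,w) - (if u = w then \<mu> else 0))"
  have Cc: "C \<in> carrier_mat n n" using A unfolding C char_matrix_def by auto
  have Ce: "C $$ (u,w) = complex_of_real (B u w)" if "u < n" "w < n" for u w
    using that A unfolding C B_def char_matrix_def by auto
  have Bsym: "g u * B u w = g w * B w u" if "u < n" "w < n" for u w
    using gsym[OF that] unfolding B_def by (auto simp: algebra_simps)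
  define y where "y = C *\<^sub>v x"
  have yc: "y \<in> carrier_vec n" unfolding y_def using Cc x by auto
  have ye: "y $ u = (\<Sum>w<n. complex_of_real (B u w) * x $ w)" if "u < n" for u
    unfolding y_def using mv_sum[OF Cc x that] Ce that by simp
  have cy: "(\<Sum>w<n. complex_of_real (B u w) * y $ w) = 0" if "u < n" for u
  proof -
    have "(C *\<^sub>v y) $ u = 0" using cc that unfolding y_def by simp
    then show ?thesis using mv_sum[OF Cc yc that] Ce that by simp
  qed
  have "(\<Sum>u<n. complex_of_real (g u) * (cnj (y $ u) * y $ u))
     = (\<Sum>u<n. \<Sum>w<n. complex_of_real (g u * B u w) * (cnj (y $ u) * x $ w))"
  proof (intro sum.cong refl)
    fix u assume u: "u \<in> {..<n}"
    have e1: "y $ u = (\<Sum>w<n. complex_of_real (B u w) * x $ w)" using ye u by simp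
    have "complex_of_real (g u) * (cnj (y $ u) * y $ u)
       = complex_of_real (g u) * (cnj (y $ u) * (\<Sum>w<n. complex_of_real (B u w) * x $ w))"
      by (subst (2) e1) (rule refl)
    also have "\<dots> = (\<Sum>w<n. complex_of_real (g u * B u w) * (cnj (y $ u) * x $ w))"
      by (simp add: sum_distrib_left algebra_simps)
    finally show "complex_of_real (g u) * (cnj (y $ u) * y $ u)
       = (\<Sum>w<n. complex_of_real (g u * B u w) * (cnj (y $ u) * x $ w))" .
  qed
  also have "\<dots> = (\<Sum>w<n. \<Sum>u<n. complex_of_real (g u * B u w) * (cnj (y $ u) * x $ w))"
    by (rule sum.swap)
  also have "\<dots> = (\<Sum>w<n. complex_of_real (g w) * x $ w * cnj (\<Sum>u<n. complex_of_real (B w u) * y $ u))"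
    by (intro sum.cong refl) (simp add: Bsym sum_distrib_left algebra_simps)
  also have "\<dots> = 0" using cy by simp
  finally have S0: "(\<Sum>u<n. complex_of_real (g u) * (cnj (y $ u) * y $ u)) = 0" .
  have eqS: "(\<Sum>u<n. complex_of_real (g u) * (cnj (y $ u) * y $ u)) = complex_of_real (\<Sum>u<n. g u * (cmod (y $ u))\<^sup>2)"
  proof -
    have nsq: "(complex_of_real (cmod z))\<^sup>2 = cnj z * z" for z
      using complex_norm_square[of z] by (simp add: mult.commute)
    show ?thesis by (simp add: nsq)
  qed
  have "complex_of_real (\<Sum>u<n. g u * (cmod (y $ u))\<^sup>2) = 0" using eqS S0 by argo
  then have S1: "(\<Sum>u<n. g u * (cmod (y $ u))\<^sup>2) = 0" by (simp only: of_real_eq_0_iff)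
  have "g u * (cmod (y $ u))\<^sup>2 = 0" if "u \<in> {..<n}" for u
    using sum_nonneg_eq_0_iff[of "{..<n}" "\<lambda>u. g u * (cmod (y $ u))\<^sup>2"] S1 gpos that
    by (simp add: less_imp_le)
  then have "y $ u = 0" if "u < n" for u using gpos[OF that] that by fastforce
  then show ?thesis using yc unfolding y_def[symmetric] by (intro eq_vecI) auto
qed

lemma ker_pow:
  fixes C :: "'a::field mat"
  assumes C: "C \<in> carrier_mat n n"
    and nc: "\<And>x. x \<in> carrier_vec n \<Longrightarrow> C *\<^sub>v (C *\<^sub>v x) = 0\<^sub>v n \<Longrightarrow> C *\<^sub>v x = 0\<^sub>v n"
    and k: "1 \<le> k"
  shows "mat_kernel (C ^\<^sub>m k) = mat_kernel C"
  using k
proof (induction k rule: dec_induct)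
  case base
  have "C ^\<^sub>m 1 = C" using C by simp
  then show ?case by simp
next
  case (step k)
  have Ck: "C ^\<^sub>m k \<in> carrier_mat n n" using C by simp
  have CS: "C ^\<^sub>m Suc k \<in> carrier_mat n n" using C by (rule pow_carrier_mat)
  show ?case
  proof (rule Set.set_eqI)
    fix x
    show "x \<in> mat_kernel (C ^\<^sub>m Suc k) \<longleftrightarrow> x \<in> mat_kernel C"
    proof (cases "x \<in> carrier_vec n")
      case False then show ?thesis using mat_kernel[OF CS] mat_kernel[OF C] by auto
    next
      case x: True
      have Cx: "C *\<^sub>v x \<in> carrier_vec n" using C x by simp
      have "x \<in> mat_kernel (C ^\<^sub>m Suc k) \<longleftrightarrow> (C ^\<^sub>m k) *\<^sub>v (C *\<^sub>v x) = 0\<^sub>v n"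
        using mat_kernel[OF CS] x C Ck by (simp add: assoc_mult_mat_vec[OF Ck C x])
      also have "\<dots> \<longleftrightarrow> C *\<^sub>v x \<in> mat_kernel (C ^\<^sub>m k)" using mat_kernel[OF Ck] Cx by simp
      also have "\<dots> \<longleftrightarrow> C *\<^sub>v (C *\<^sub>v x) = 0\<^sub>v n" using step.IH mat_kernel[OF C] Cx by simp
      also have "\<dots> \<longleftrightarrow> C *\<^sub>v x = 0\<^sub>v n" using nc[OF x] C x by auto
      also have "\<dots> \<longleftrightarrow> x \<in> mat_kernel C" using mat_kernel[OF C] x by simp
      finally show ?thesis .
    qed
  qed
qed

lemma alg_le_kd:
  fixes A :: "real mat" and g :: "nat \<Rightarrow> real" and \<mu> :: real
  assumes A: "A \<in> carrier_mat n n" and gpos: "\<And>u. u < n \<Longrightarrow> g u > 0"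
    and gsym: "\<And>u w. u < n \<Longrightarrow> w < n \<Longrightarrow> g u * A $$ (u,w) = g w * A $$ (w,u)"
  shows "alg_mult \<mu> A \<le> kernel_dim (char_matrix (map_mat complex_of_real A) (complex_of_real \<mu>))"
proof -
  define Ac where "Ac = map_mat complex_of_real A"
  define C where "C = char_matrix Ac (complex_of_real \<mu>)"
  have Ac: "Ac \<in> carrier_mat n n" using A unfolding Ac_def by auto
  have Cc: "C \<in> carrier_mat n n" using Ac unfolding C_def char_matrix_def by auto
  interpret mp: map_poly_inj_idom_divide_hom "of_real :: real \<Rightarrow> complex" ..
  have cp: "char_poly Ac = map_poly complex_of_real (char_poly A)"
    unfolding Ac_def by (rule of_real_hom.char_poly_hom[OF A])
  have ord: "alg_mult \<mu> A = Polynomial.order (complex_of_real \<mu>) (char_poly Ac)"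
    unfolding alg_mult_def cp mp.order_hom ..
  obtain as where "char_poly Ac = (\<Prod>a\<leftarrow>as. [:- a, 1:])" using char_poly_factorized[OF Ac] by blast
  from jordan_nf_exists[OF Ac this] obtain n_as where jnf: "jordan_nf Ac n_as" by blast
  let ?L = "map fst [(n,e)\<leftarrow>n_as. e = complex_of_real \<mu>]"
  have o2: "Polynomial.order (complex_of_real \<mu>) (char_poly Ac) = sum_list ?L"
    unfolding jordan_nf_char_poly[OF jnf] order_jordan_prod ..
  define K where "K = sum_list (map fst n_as) + 1"
  have Kge: "m \<le> K" if "m \<in> set ?L" for m
  proof -
    have "m \<in> set (map fst n_as)" using that by auto
    then have "m \<le> sum_list (map fst n_as)" by (rule member_le_sum_list) simp
    then show ?thesis unfolding K_def by simp
  qed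
  have "dim_gen_eigenspace Ac (complex_of_real \<mu>) K = (\<Sum>m\<leftarrow>?L. min K m)"
    using dim_gen_eigenspace[OF jnf] .
  also have "(\<Sum>m\<leftarrow>?L. min K m) = sum_list ?L"
  proof -
    have e: "map (min K) ?L = ?L" using Kge by (intro map_idI) (simp add: min_absorb2)
    show ?thesis using e by metis
  qed
  finally have dg: "dim_gen_eigenspace Ac (complex_of_real \<mu>) K = sum_list ?L" .
  have nc: "C *\<^sub>v x = 0\<^sub>v n" if "x \<in> carrier_vec n" "C *\<^sub>v (C *\<^sub>v x) = 0\<^sub>v n" for x
    using no_chain[OF A gpos gsym that(1) _ that(2)] unfolding C_def Ac_def by blast
  have "1 \<le> K" unfolding K_def by simp
  then have "mat_kernel (C ^\<^sub>m K) = mat_kernel C" by (intro ker_pow[OF Cc]) (use nc in auto)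
  then have "kernel_dim (C ^\<^sub>m K) = kernel_dim C" using Cc by (intro kernel_dim_cong) auto
  then show ?thesis using dg o2 ord unfolding dim_gen_eigenspace_def C_def Ac_def by simp
qed

lemma compress:
  fixes M :: "'a::field mat"
  assumes M: "M \<in> carrier_mat n n" and T: "T \<subseteq> {0..<n}" and x: "x \<in> carrier_vec n"
    and nz: "u0 \<in> T" "x $ u0 \<noteq> 0" and supp: "\<And>u. u < n \<Longrightarrow> u \<notin> T \<Longrightarrow> x $ u = 0"
    and ev: "\<And>u. u \<in> T \<Longrightarrow> (M *\<^sub>v x) $ u = \<mu> * x $ u"
  shows "eigenvector (principal_submatrix M T) (vec (card T) (\<lambda>j. x $ pick T j)) \<mu>"
proof -
  define k where "k = card T"
  have finT: "finite T" using T finite_subset by blast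
  have cT: "{i. i < dim_row M \<and> i \<in> T} = T" "{i. i < dim_col M \<and> i \<in> T} = T" using M T by auto
  define P where "P = principal_submatrix M T"
  have Pd: "P = mat k k (\<lambda>(i,j). M $$ (pick T i, pick T j))"
    unfolding P_def principal_submatrix_def submatrix_def cT k_def ..
  have pin: "pick T j \<in> T" if "j < k" for j using pick_in_set_le that unfolding k_def by blast
  have bij: "bij_betw (pick T) {..<k} T"
  proof (rule bij_betw_imageI)
    show "inj_on (pick T) {..<k}"
    proof (rule inj_onI)
      fix i j assume i: "i \<in> {..<k}" and j: "j \<in> {..<k}" and e: "pick T i = pick T j"
      show "i = j"
      proof (rule ccontr)
        assume "i \<noteq> j"
        then have "i < j \<or> j < i" by auto
        then show False using pick_mono_le[of i T j] pick_mono_le[of j T i] i j e unfolding k_def by auto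
      qed
    qed
    show "pick T ` {..<k} = T"
    proof
      show "pick T ` {..<k} \<subseteq> T" using pin by auto
      show "T \<subseteq> pick T ` {..<k}"
      proof
        fix t assume t: "t \<in> T"
        have "{a \<in> T. a < t} \<subset> T" using t by auto
        then have "card {a \<in> T. a < t} < k" unfolding k_def using finT by (rule psubset_card_mono[rotated])
        moreover have "pick T (card {a \<in> T. a < t}) = t" using pick_card_in_set[OF t] .
        ultimately show "t \<in> pick T ` {..<k}" by force
      qed
    qed
  qed
  define y where "y = vec k (\<lambda>j. x $ pick T j)"
  have pn: "pick T j < n" if "j < k" for j using pin[OF that] T by auto
  have "P *\<^sub>v y = \<mu> \<cdot>\<^sub>v y"
  proof (rule eq_vecI)
    show "dim_vec (P *\<^sub>v y) = dim_vec (\<mu> \<cdot>\<^sub>v y)" unfolding Pd y_def by simp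
    fix i assume "i < dim_vec (\<mu> \<cdot>\<^sub>v y)"
    then have i: "i < k" unfolding y_def by simp
    have "(P *\<^sub>v y) $ i = (\<Sum>j<k. M $$ (pick T i, pick T j) * x $ pick T j)"
      unfolding Pd y_def using i by (simp add: scalar_prod_def lessThan_atLeast0 row_def)
    also have "\<dots> = (\<Sum>t\<in>T. M $$ (pick T i, t) * x $ t)"
      using sum.reindex_bij_betw[OF bij, of "\<lambda>t. M $$ (pick T i, t) * x $ t"] by simp
    also have "\<dots> = (\<Sum>t<n. M $$ (pick T i, t) * x $ t)"
      by (rule sum.mono_neutral_left) (use T supp in auto)
    also have "\<dots> = (M *\<^sub>v x) $ pick T i" using mv_sum[OF M x pn[OF i]] by simp
    also have "\<dots> = \<mu> * x $ pick T i" using ev pin[OF i] by simp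
    finally show "(P *\<^sub>v y) $ i = (\<mu> \<cdot>\<^sub>v y) $ i" unfolding y_def using i by simp
  qed
  moreover have "y \<noteq> 0\<^sub>v k"
  proof
    assume y0: "y = 0\<^sub>v k"
    define j where "j = card {a \<in> T. a < u0}"
    have "{a \<in> T. a < u0} \<subset> T" using nz by auto
    then have j: "j < k" unfolding k_def j_def using finT by (rule psubset_card_mono[rotated])
    have "pick T j = u0" unfolding j_def using pick_card_in_set[OF nz(1)] .
    then have "y $ j = x $ u0" unfolding y_def using j by simp
    then show False using y0 j nz by simp
  qed
  moreover have "dim_row P = k" unfolding Pd by simp
  ultimately show ?thesis unfolding eigenvector_def P_def[symmetric] y_def[symmetric] k_def[symmetric]
    unfolding y_def by auto
qed

lemma re_part:
  fixes A :: "real mat" and x :: "complex vec"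
  assumes A: "A \<in> carrier_mat n n" and x: "x \<in> carrier_vec n" and u: "u < n"
    and z: "(char_matrix (map_mat complex_of_real A) (complex_of_real \<mu>) *\<^sub>v x) $ u = 0"
  shows "(A *\<^sub>v vec n (\<lambda>w. Re (x $ w))) $ u = \<mu> * Re (x $ u)"
proof -
  let ?C = "char_matrix (map_mat complex_of_real A) (complex_of_real \<mu>)"
  have Cc: "?C \<in> carrier_mat n n" using A unfolding char_matrix_def by auto
  have Ce: "?C $$ (u,w) = complex_of_real (A $$ (u,w)) - (if u = w then complex_of_real \<mu> else 0)" if "w < n" for w
    using A u that unfolding char_matrix_def by auto
  have "0 = (\<Sum>w<n. ?C $$ (u,w) * x $ w)" using mv_sum[OF Cc x u] z by simp
  also have "\<dots> = (\<Sum>w<n. complex_of_real (A $$ (u,w)) * x $ w - (if w = u then complex_of_real \<mu> * x $ w else 0))"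
    by (intro sum.cong refl) (auto simp: Ce algebra_simps)
  also have "\<dots> = (\<Sum>w<n. complex_of_real (A $$ (u,w)) * x $ w) - complex_of_real \<mu> * x $ u"
    using u by (simp add: sum_subtractf)
  finally have "(\<Sum>w<n. complex_of_real (A $$ (u,w)) * x $ w) = complex_of_real \<mu> * x $ u" by simp
  then have "Re (\<Sum>w<n. complex_of_real (A $$ (u,w)) * x $ w) = \<mu> * Re (x $ u)" by simp
  moreover have "Re (\<Sum>w<n. complex_of_real (A $$ (u,w)) * x $ w) = (\<Sum>w<n. A $$ (u,w) * Re (x $ w))"
    by (simp add: Re_sum)
  moreover have "(A *\<^sub>v vec n (\<lambda>w. Re (x $ w))) $ u = (\<Sum>w<n. A $$ (u,w) * Re (x $ w))"
    using mv_sum[OF A _ u, of "vec n (\<lambda>w. Re (x $ w))"] by simp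
  ultimately show ?thesis by simp
qed

lemma exists_kernel_vec:
  fixes M :: "'a::field mat" and Ts :: "nat \<Rightarrow> nat set"
  assumes tree: "is_tree n E" and M: "M \<in> carrier_mat n n"
    and pat: "\<And>u w. u < n \<Longrightarrow> w < n \<Longrightarrow> u \<noteq> w \<Longrightarrow> (M $$ (u,w) \<noteq> 0 \<longleftrightarrow> E u w)"
    and sub: "\<And>i. i < c \<Longrightarrow> is_subtree n E (Ts i)"
    and indep: "\<And>i j. i < c \<Longrightarrow> j < c \<Longrightarrow> i \<noteq> j \<Longrightarrow> independent E (Ts i) (Ts j)"
    and big: "kernel_dim M > path_cover_number E ({0..<n} - (\<Union>i<c. Ts i))"
  shows "\<exists>i<c. \<exists>x\<in>KS M n (Ts i). \<exists>u0\<in>Ts i. x $ u0 \<noteq> 0"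
proof (rule ccontr)
  assume "\<not> ?thesis"
  then have all0: "\<And>i x u. i < c \<Longrightarrow> x \<in> KS M n (Ts i) \<Longrightarrow> u \<in> Ts i \<Longrightarrow> x $ u = 0" by blast
  have "KS M n (Ts i) = {0\<^sub>v n}" if i: "i < c" for i
  proof
    show "{0\<^sub>v n} \<subseteq> KS M n (Ts i)" unfolding KS_def using M by auto
    show "KS M n (Ts i) \<subseteq> {0\<^sub>v n}"
    proof
      fix x assume x: "x \<in> KS M n (Ts i)"
      have "x $ u = 0" if "u < n" for u
        using all0[OF i x] x that unfolding KS_def by (cases "u \<in> Ts i") auto
      then show "x \<in> {0\<^sub>v n}" using x unfolding KS_def by (auto intro!: eq_vecI)
    qed
  qed
  then have "kernel_dim M \<le> path_cover_number E ({0..<n} - (\<Union>i<c. Ts i))"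
    by (intro main_geo[OF tree M pat sub indep]) auto
  then show False using big by simp
qed

theorem mainTheorem9:
  fixes n c :: nat and E :: "nat \<Rightarrow> nat \<Rightarrow> bool" and A :: "real mat"
    and Ts :: "nat \<Rightarrow> nat set"
  assumes tree: "is_tree n E"
    and AR: "in_R n E A"
    and sub: "\<And>i. i < c \<Longrightarrow> is_subtree n E (Ts i)"
    and indep: "\<And>i j. i < c \<Longrightarrow> j < c \<Longrightarrow> i \<noteq> j \<Longrightarrow> independent E (Ts i) (Ts j)"
  shows "(kernel_dim A > path_cover_number E ({0..<n} - (\<Union>i<c. Ts i)) \<longrightarrow>
            (\<exists>i<c. det (principal_submatrix A (Ts i)) = 0))
       \<and> (\<forall>\<mu>::real. eigenvalue A \<mu> \<and>
              alg_mult \<mu> A > path_cover_number E ({0..<n} - (\<Union>i<c. Ts i)) \<longrightarrow>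
            (\<exists>i<c. eigenvalue (principal_submatrix A (Ts i)) \<mu>))"
proof (intro conjI impI allI)
  let ?p = "path_cover_number E ({0..<n} - (\<Union>i<c. Ts i))"
  have A: "A \<in> carrier_mat n n" and patA: "\<And>u w. u < n \<Longrightarrow> w < n \<Longrightarrow> u \<noteq> w \<Longrightarrow> (A $$ (u,w) \<noteq> 0 \<longleftrightarrow> E u w)"
    using AR unfolding in_R_def by auto
  have TsV: "Ts i \<subseteq> {0..<n}" if "i < c" for i using sub[OF that] unfolding is_subtree_def by auto
  have Pc: "principal_submatrix A (Ts i) \<in> carrier_mat (card (Ts i)) (card (Ts i))" if "i < c" for i
  proof -
    have "{j. j < dim_row A \<and> j \<in> Ts i} = Ts i" "{j. j < dim_col A \<and> j \<in> Ts i} = Ts i" using A TsV[OF that] by auto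
    then show ?thesis unfolding principal_submatrix_def using dim_submatrix[of A "Ts i" "Ts i"] by auto
  qed
  {
    assume big: "kernel_dim A > ?p"
    obtain i x u0 where i: "i < c" and x: "x \<in> KS A n (Ts i)" and u0: "u0 \<in> Ts i" "x $ u0 \<noteq> 0"
      using exists_kernel_vec[OF tree A patA sub indep big] by blast
    have xc: "x \<in> carrier_vec n" using x unfolding KS_def by auto
    have "eigenvector (principal_submatrix A (Ts i)) (vec (card (Ts i)) (\<lambda>j. x $ pick (Ts i) j)) 0"
    proof (rule compress[OF A TsV[OF i] xc u0])
      show "x $ u = 0" if "u < n" "u \<notin> Ts i" for u using x that unfolding KS_def by auto
      show "(A *\<^sub>v x) $ u = 0 * x $ u" if "u \<in> Ts i" for u using x that TsV[OF i] unfolding KS_def by auto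
    qed
    moreover have "(0::real) \<cdot>\<^sub>v vec (card (Ts i)) (\<lambda>j. x $ pick (Ts i) j) = 0\<^sub>v (card (Ts i))"
      by (rule eq_vecI) auto
    ultimately have "\<exists>v. v \<in> carrier_vec (card (Ts i)) \<and> v \<noteq> 0\<^sub>v (card (Ts i)) \<and> principal_submatrix A (Ts i) *\<^sub>v v = 0\<^sub>v (card (Ts i))"
      unfolding eigenvector_def using Pc[OF i] by (intro exI[of _ "vec (card (Ts i)) (\<lambda>j. x $ pick (Ts i) j)"]) auto
    then have "det (principal_submatrix A (Ts i)) = 0" using det_0_iff_vec_prod_zero[OF Pc[OF i]] by simp
    then show "\<exists>i<c. det (principal_submatrix A (Ts i)) = 0" using i by blast
  }
  fix \<mu> :: real
  assume "eigenvalue A \<mu> \<and> ?p < alg_mult \<mu> A"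
  then have big: "?p < alg_mult \<mu> A" by simp
  obtain g where g: "\<forall>u<n. g u > 0" "\<forall>u<n. \<forall>w<n. g u * A $$ (u,w) = g w * A $$ (w,u)"
    using sym_weights[OF tree AR] by blast
  define Cm where "Cm = char_matrix (map_mat complex_of_real A) (complex_of_real \<mu>)"
  have "alg_mult \<mu> A \<le> kernel_dim Cm" unfolding Cm_def by (rule alg_le_kd[OF A]) (use g in auto)
  then have bigC: "kernel_dim Cm > ?p" using big by simp
  have Cc: "Cm \<in> carrier_mat n n" using A unfolding Cm_def char_matrix_def by auto
  have patC: "(Cm $$ (u,w) \<noteq> 0 \<longleftrightarrow> E u w)" if "u < n" "w < n" "u \<noteq> w" for u w
    using patA[OF that] that A unfolding Cm_def char_matrix_def by auto
  obtain i x u0 where i: "i < c" and x: "x \<in> KS Cm n (Ts i)" and u0: "u0 \<in> Ts i" "x $ u0 \<noteq> 0"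
    using exists_kernel_vec[OF tree Cc patC sub indep bigC] by blast
  have xc: "x \<in> carrier_vec n" using x unfolding KS_def by auto
  have key: "eigenvalue (principal_submatrix A (Ts i)) \<mu>"
    if y: "y \<in> KS Cm n (Ts i)" "Re (y $ u0) \<noteq> 0" for y
  proof -
    have yc: "y \<in> carrier_vec n" using y unfolding KS_def by auto
    have "eigenvector (principal_submatrix A (Ts i)) (vec (card (Ts i)) (\<lambda>j. vec n (\<lambda>w. Re (y $ w)) $ pick (Ts i) j)) \<mu>"
    proof (rule compress[OF A TsV[OF i]])
      show "vec n (\<lambda>w. Re (y $ w)) \<in> carrier_vec n" by simp
      show "u0 \<in> Ts i" by fact
      show "vec n (\<lambda>w. Re (y $ w)) $ u0 \<noteq> 0" using y(2) u0 TsV[OF i] by auto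
      show "vec n (\<lambda>w. Re (y $ w)) $ u = 0" if "u < n" "u \<notin> Ts i" for u using y that unfolding KS_def by auto
      show "(A *\<^sub>v vec n (\<lambda>w. Re (y $ w))) $ u = \<mu> * vec n (\<lambda>w. Re (y $ w)) $ u" if u: "u \<in> Ts i" for u
      proof -
        have un: "u < n" using u TsV[OF i] by auto
        have "(Cm *\<^sub>v y) $ u = 0" using y u TsV[OF i] unfolding KS_def by auto
        then show ?thesis using re_part[OF A yc un] un unfolding Cm_def by simp
      qed
    qed
    then show ?thesis unfolding eigenvalue_def by blast
  qed
  show "\<exists>i<c. eigenvalue (principal_submatrix A (Ts i)) \<mu>"
  proof (cases "Re (x $ u0) = 0")
    case False then show ?thesis using key[OF x] i by blast
  next
    case True
    then have im: "Im (x $ u0) \<noteq> 0" using u0(2) complex_eq_iff by force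
    define x' where "x' = (- \<i>) \<cdot>\<^sub>v x"
    have "x' \<in> KS Cm n (Ts i)"
    proof -
      have "Cm *\<^sub>v x' = (- \<i>) \<cdot>\<^sub>v (Cm *\<^sub>v x)" unfolding x'_def using Cc xc by (rule mult_mat_vec)
      then show ?thesis using x Cc unfolding KS_def x'_def by auto
    qed
    moreover have "Re (x' $ u0) \<noteq> 0" using im u0 TsV[OF i] xc unfolding x'_def by auto
    ultimately show ?thesis using key i by blast
  qed
qed

end
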